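(* Let $X$ be a finite connected simple $(q+1)$-regular graph ($q\ge1$), let $\alpha=\frac{(q+1)+\sqrt{(q+1)^2+4(q+1)}}{2}$, and fix $x_0\in VX$. Let $Z_X(u,x_0)=\exp\big(\sum_{m=1}^\infty\frac{N_m(x_0)}{m}u^m\big)$, where $N_m(x_0)$ is the number of closed geodesic paths of length $m$ starting at $x_0$. Then for $|u|<1/\alpha$, $$Z_X(u,x_0)=(1-u^2)^{-\frac{q-1}{2}}\prod_{\lambda\in\sigma_{x_0}(\Delta_X)}\big(1-(q+1-\lambda)u+qu^2\big)^{-m_{x_0}(\lambda)}\times\exp\Big(\sum_{m=3}^\infty\frac{R_m(x_0)}{m}u^m\Big).$$
   Context: A graph $X=(VX,EX)$ has maps $e\mapsto(o(e),t(e))$, $e\mapsto\bar e$ with $\bar e\ne e$, $\bar{\bar e}=e$, $o(e)=t(\bar e)$; simple means no loops and no multiple edges; $(q+1)$-regular means $\deg(x)=|\{e:o(e)=x\}|=q+1$ for all $x$. A path $c=(e_1,\dots,e_n)$ ($t(e_i)=o(e_{i+1})$) is closed if $o(e_1)=t(e_n)$, has a back-tracking if $e_{i+1}=\bar e_i$ for some $i$, has a tail if $e_n=\bar e_1$; a geodesic loop is a closed path without back-tracking, a closed geodesic path is a geodesic loop without tail; it starts at $o(e_1)$. $\Delta_X=D_X-A_X$ with $(A_Xf)(x)=\sum_{o(e)=x}f(t(e))$, $(D_Xf)(x)=\deg(x)f(x)$. For an eigenvalue $\lambda$ of $\Delta_X$, the $x_0$-local multiplicity $m_{x_0}(\lambda)$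 is the $(x_0,x_0)$-entry of the orthogonal projection (primitive idempotent) onto the $\lambda$-eigenspace; the $x_0$-local spectrum $\sigma_{x_0}(\Delta_X)$ is the set of eigenvalues $\lambda$ with $m_{x_0}(\lambda)>0$. With $c_k(x)$ the number of geodesic loops of length $k$ starting at $x$ and $(\Delta_Xc_k)(x)=\deg(x)c_k(x)-\sum_{o(e)=x}c_k(t(e))$, set $R_m(x_0)=\sum_{j=1}^{\lceil m/2\rceil-1}j(\Delta_Xc_{m-2j})(x_0)$. Non-integer powers $(1-w)^s$ mean $\exp(s\log(1-w))$ with $\log(1-w)=-\sum_{n\ge1}w^n/n$. *)

theory Defs
  imports Complex_Main
begin

text \<open>The directed edges e with o(e)=x, t(e)=y are the pairs (x,y) with adj x y,
  and the reversal of (x,y) is (y,x).  A path (e_1,...,e_n) is encoded by its vertex list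
  [v_0,...,v_n] with e_i = (v_(i-1), v_i).\<close>

definition simple_graph :: "('a \<Rightarrow> 'a \<Rightarrow> bool) \<Rightarrow> bool" where
  "simple_graph adj \<longleftrightarrow> (\<forall>x y. adj x y \<longrightarrow> adj y x) \<and> (\<forall>x. \<not> adj x x)"

definition connected_graph :: "('a \<Rightarrow> 'a \<Rightarrow> bool) \<Rightarrow> bool" where
  "connected_graph adj \<longleftrightarrow> (\<forall>x y. adj\<^sup>*\<^sup>* x y)"

definition deg :: "('a \<Rightarrow> 'a \<Rightarrow> bool) \<Rightarrow> 'a \<Rightarrow> nat" where
  "deg adj x = card {y. adj x y}"

definition regular_graph :: "('a \<Rightarrow> 'a \<Rightarrow> bool) \<Rightarrow> nat \<Rightarrow> bool" where
  "regular_graph adj d \<longleftrightarrow> (\<forall>x. deg adj x = d)"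

text \<open>Path of length n = length vs - 1 \<ge> 1 (each consecutive pair is an edge).\<close>
definition is_path :: "('a \<Rightarrow> 'a \<Rightarrow> bool) \<Rightarrow> 'a list \<Rightarrow> bool" where
  "is_path adj vs \<longleftrightarrow> 2 \<le> length vs \<and> (\<forall>i. Suc i < length vs \<longrightarrow> adj (vs ! i) (vs ! Suc i))"

definition is_closed :: "'a list \<Rightarrow> bool" where
  "is_closed vs \<longleftrightarrow> hd vs = last vs"

text \<open>back-tracking: e_(i+1) = reverse of e_i\<close>
definition has_backtracking :: "'a list \<Rightarrow> bool" where
  "has_backtracking vs \<longleftrightarrow>
     (\<exists>i. i + 2 < length vs \<and> (vs ! Suc i, vs ! (i + 2)) = (vs ! Suc i, vs ! i))"

text \<open>tail: e_n = reverse of e_1\<close>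
definition has_tail :: "'a list \<Rightarrow> bool" where
  "has_tail vs \<longleftrightarrow>
     (let n = length vs - 1 in (vs ! (n - 1), vs ! n) = (vs ! 1, vs ! 0))"

definition geodesic_loops :: "('a \<Rightarrow> 'a \<Rightarrow> bool) \<Rightarrow> nat \<Rightarrow> 'a \<Rightarrow> 'a list set" where
  "geodesic_loops adj k x =
     {vs. is_path adj vs \<and> length vs = Suc k \<and> hd vs = x \<and> is_closed vs \<and> \<not> has_backtracking vs}"

definition closed_geodesics :: "('a \<Rightarrow> 'a \<Rightarrow> bool) \<Rightarrow> nat \<Rightarrow> 'a \<Rightarrow> 'a list set" where
  "closed_geodesics adj k x = {vs \<in> geodesic_loops adj k x. \<not> has_tail vs}"

definition c_count :: "('a \<Rightarrow> 'a \<Rightarrow> bool) \<Rightarrow> nat \<Rightarrow> 'a \<Rightarrow> nat" where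
  "c_count adj k x = card (geodesic_loops adj k x)"

definition N_count :: "('a \<Rightarrow> 'a \<Rightarrow> bool) \<Rightarrow> nat \<Rightarrow> 'a \<Rightarrow> nat" where
  "N_count adj m x = card (closed_geodesics adj m x)"

definition laplacian :: "('a \<Rightarrow> 'a \<Rightarrow> bool) \<Rightarrow> ('a \<Rightarrow> 'b::comm_ring_1) \<Rightarrow> 'a \<Rightarrow> 'b" where
  "laplacian adj f x = of_nat (deg adj x) * f x - (\<Sum>y\<in>{y. adj x y}. f y)"

definition eigenspace :: "('a::finite \<Rightarrow> 'a \<Rightarrow> bool) \<Rightarrow> real \<Rightarrow> ('a \<Rightarrow> real) set" where
  "eigenspace adj lam = {f. \<forall>x. laplacian adj f x = lam * f x}"

definition is_eigenvalue :: "('a::finite \<Rightarrow> 'a \<Rightarrow> bool) \<Rightarrow> real \<Rightarrow> bool" where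
  "is_eigenvalue adj lam \<longleftrightarrow> (\<exists>f \<in> eigenspace adj lam. f \<noteq> (\<lambda>_. 0))"

definition ip :: "('a::finite \<Rightarrow> real) \<Rightarrow> ('a \<Rightarrow> real) \<Rightarrow> real" where
  "ip f g = (\<Sum>x\<in>UNIV. f x * g x)"

definition eig_proj :: "('a::finite \<Rightarrow> 'a \<Rightarrow> bool) \<Rightarrow> real \<Rightarrow> ('a \<Rightarrow> real) \<Rightarrow> ('a \<Rightarrow> real)" where
  "eig_proj adj lam v =
     (THE g. g \<in> eigenspace adj lam \<and> (\<forall>h \<in> eigenspace adj lam. ip (\<lambda>x. v x - g x) h = 0))"

text \<open>(x0,x0)-entry of the projection: (P delta_x0)(x0).\<close>
definition local_mult :: "('a::finite \<Rightarrow> 'a \<Rightarrow> bool) \<Rightarrow> 'a \<Rightarrow> real \<Rightarrow> real" where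
  "local_mult adj x0 lam = eig_proj adj lam (\<lambda>x. if x = x0 then 1 else 0) x0"

definition local_spectrum :: "('a::finite \<Rightarrow> 'a \<Rightarrow> bool) \<Rightarrow> 'a \<Rightarrow> real set" where
  "local_spectrum adj x0 = {lam. is_eigenvalue adj lam \<and> local_mult adj x0 lam > 0}"

definition R_term :: "('a::finite \<Rightarrow> 'a \<Rightarrow> bool) \<Rightarrow> nat \<Rightarrow> 'a \<Rightarrow> int" where
  "R_term adj m x0 =
     (\<Sum>j = 1..(m + 1) div 2 - 1.
        int j * laplacian adj (\<lambda>x. int (c_count adj (m - 2 * j) x)) x0)"

definition log1m :: "complex \<Rightarrow> complex" where
  "log1m w = - (\<Sum>n. w ^ Suc n / of_nat (Suc n))"

definition pow1m :: "complex \<Rightarrow> complex \<Rightarrow> complex" where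
  "pow1m w s = exp (s * log1m w)"

definition zeta_local :: "('a::finite \<Rightarrow> 'a \<Rightarrow> bool) \<Rightarrow> complex \<Rightarrow> 'a \<Rightarrow> complex" where
  "zeta_local adj u x0 =
     exp (\<Sum>m. of_nat (N_count adj (Suc m) x0) / of_nat (Suc m) * u ^ Suc m)"

end

theory Submission
  imports Defs "HOL-Analysis.Analysis"
begin


fun Qc :: "('a \<Rightarrow> 'a \<Rightarrow> bool) \<Rightarrow> nat \<Rightarrow> 'a \<Rightarrow> 'a \<Rightarrow> 'a \<Rightarrow> 'a \<Rightarrow> nat" where
  "Qc adj 0 p x y s = 0"
| "Qc adj (Suc 0) p x y s = (if adj x y \<and> y \<noteq> p \<and> x \<noteq> s then 1 else 0)"
| "Qc adj (Suc (Suc k)) p x y s = (\<Sum>z\<in>{z. adj x z \<and> z \<noteq> p}. Qc adj (Suc k) x z y s)"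

definition Sset :: "('a \<Rightarrow> 'a \<Rightarrow> bool) \<Rightarrow> nat \<Rightarrow> 'a \<Rightarrow> 'a \<Rightarrow> 'a \<Rightarrow> 'a \<Rightarrow> 'a list set" where
  "Sset adj k p x y s = {vs. length vs = Suc k \<and> hd vs = x \<and> last vs = y
     \<and> (\<forall>i. Suc i < length vs \<longrightarrow> adj (vs ! i) (vs ! Suc i))
     \<and> (\<forall>i. i + 2 < length vs \<longrightarrow> vs ! (i+2) \<noteq> vs ! i) \<and> vs ! 1 \<noteq> p \<and> vs ! (k - 1) \<noteq> s}"

lemma has_backtracking_iff: "has_backtracking vs \<longleftrightarrow> (\<exists>i. i + 2 < length vs \<and> vs ! (i+2) = vs ! i)"
  unfolding has_backtracking_def by auto

lemma Sset_finite: "finite (Sset (adj::'a::finite\<Rightarrow>_) k p x y s)"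
proof -
  have "Sset adj k p x y s \<subseteq> {xs. set xs \<subseteq> (UNIV::'a set) \<and> length xs = Suc k}"
    unfolding Sset_def by auto
  moreover have "finite {xs. set xs \<subseteq> (UNIV::'a set) \<and> length xs = Suc k}"
    using finite_lists_length_eq[of "UNIV::'a set"] by simp
  ultimately show ?thesis using finite_subset by blast
qed

lemma Sset_one: "Sset adj (Suc 0) p x y s = (if adj x y \<and> y \<noteq> p \<and> x \<noteq> s then {[x,y]} else {})"
proof -
  have "vs \<in> Sset adj (Suc 0) p x y s \<longleftrightarrow> vs = [x,y] \<and> adj x y \<and> y \<noteq> p \<and> x \<noteq> s" for vs
  proof
    assume H: "vs \<in> Sset adj (Suc 0) p x y s"
    then have l: "length vs = Suc (Suc 0)" unfolding Sset_def by simp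
    then obtain a b where ab: "vs = [a,b]" by (auto simp: length_Suc_conv)
    have "hd vs = x" "last vs = y" "adj (vs!0) (vs!1)" "vs!1 \<noteq> p" "vs!0 \<noteq> s"
      using H l unfolding Sset_def by auto
    with ab show "vs = [x,y] \<and> adj x y \<and> y \<noteq> p \<and> x \<noteq> s" by simp
  next
    assume H: "vs = [x,y] \<and> adj x y \<and> y \<noteq> p \<and> x \<noteq> s"
    have a: "\<forall>i. Suc i < length vs \<longrightarrow> adj (vs ! i) (vs ! Suc i)"
    proof (intro allI impI)
      fix i assume "Suc i < length vs"
      then have "i = 0" using H by simp
      then show "adj (vs ! i) (vs ! Suc i)" using H by simp
    qed
    have b: "\<forall>i. i + 2 < length vs \<longrightarrow> vs ! (i+2) \<noteq> vs ! i" using H by simp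
    show "vs \<in> Sset adj (Suc 0) p x y s" unfolding Sset_def using a b H by simp
  qed
  then show ?thesis by auto
qed

lemma Sset_step:
  "Sset adj (Suc (Suc n)) p x y s = (\<Union>z\<in>{z. adj x z \<and> z \<noteq> p}. Cons x ` Sset adj (Suc n) x z y s)"
proof (intro set_eqI iffI)
  fix vs assume vs: "vs \<in> Sset adj (Suc (Suc n)) p x y s"
  then obtain ws where vws: "vs = x # ws" unfolding Sset_def
    by (cases vs) auto
  have lw: "length ws = Suc (Suc n)" using vs vws unfolding Sset_def by auto
  have "ws \<in> Sset adj (Suc n) x (ws!0) y s"
    unfolding Sset_def
  proof (intro CollectI conjI allI impI)
    show "length ws = Suc (Suc n)" by fact
    show "hd ws = ws!0" using lw by (cases ws) auto
    have "last vs = y" using vs unfolding Sset_def by blast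
    then show "last ws = y" using vws lw by (simp split: if_splits)
  next
    fix i assume i: "Suc i < length ws"
    have "\<forall>i. Suc i < length vs \<longrightarrow> adj (vs ! i) (vs ! Suc i)" using vs unfolding Sset_def by blast
    then have "adj (vs ! Suc i) (vs ! Suc (Suc i))" using i vws by (metis Suc_less_eq length_Cons)
    then show "adj (ws!i) (ws ! Suc i)" using vws by simp
  next
    fix i assume i: "i + 2 < length ws"
    have "\<forall>i. i + 2 < length vs \<longrightarrow> vs ! (i+2) \<noteq> vs ! i" using vs unfolding Sset_def by blast
    then have "vs ! (Suc i+2) \<noteq> vs ! Suc i" using i vws by (metis add_Suc length_Cons Suc_less_eq)
    then show "ws ! (i+2) \<noteq> ws ! i" using vws by simp
  next
    have "\<forall>i. i + 2 < length vs \<longrightarrow> vs ! (i+2) \<noteq> vs ! i" using vs unfolding Sset_def by blast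
    then have "vs ! (0+2) \<noteq> vs ! 0" using lw vws by (metis add_0 length_Cons zero_less_Suc Suc_less_eq add_2_eq_Suc')
    then show "ws ! 1 \<noteq> x" using vws by (simp add: numeral_2_eq_2)
    have "vs ! (Suc (Suc n) - 1) \<noteq> s" using vs unfolding Sset_def by blast
    then show "ws ! (Suc n - 1) \<noteq> s" using vws by simp
  qed
  moreover have "adj x (ws!0)" "ws!0 \<noteq> p" using vs vws unfolding Sset_def by auto
  ultimately show "vs \<in> (\<Union>z\<in>{z. adj x z \<and> z \<noteq> p}. Cons x ` Sset adj (Suc n) x z y s)"
    using vws by blast
next
  fix vs assume "vs \<in> (\<Union>z\<in>{z. adj x z \<and> z \<noteq> p}. Cons x ` Sset adj (Suc n) x z y s)"
  then obtain z ws where z: "adj x z" "z \<noteq> p" and ws: "ws \<in> Sset adj (Suc n) x z y s"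
    and vws: "vs = x # ws" by blast
  have lw: "length ws = Suc (Suc n)" and hw0: "hd ws = z" using ws unfolding Sset_def by auto
  then have hw: "ws!0 = z" by (metis hd_conv_nth list.size(3) nat.distinct(1))
  show "vs \<in> Sset adj (Suc (Suc n)) p x y s"
    unfolding Sset_def
  proof (intro CollectI conjI allI impI)
    show "length vs = Suc (Suc (Suc n))" using lw vws by simp
    show "hd vs = x" using vws by simp
    show "last vs = y" using vws ws lw unfolding Sset_def by auto
  next
    fix i assume i: "Suc i < length vs"
    show "adj (vs!i) (vs ! Suc i)"
    proof (cases i)
      case 0 then show ?thesis using vws hw z by simp
    next
      case (Suc j) then show ?thesis using vws ws i unfolding Sset_def by auto
    qed
  next
    fix i assume i: "i + 2 < length vs"
    show "vs ! (i+2) \<noteq> vs ! i"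
    proof (cases i)
      case 0 then show ?thesis using vws ws unfolding Sset_def by (simp add: numeral_2_eq_2)
    next
      case (Suc j) then show ?thesis using vws ws i unfolding Sset_def
        by (auto simp: numeral_2_eq_2)
    qed
  next
    show "vs ! 1 \<noteq> p" using vws hw z by simp
    show "vs ! (Suc (Suc n) - 1) \<noteq> s" using vws ws unfolding Sset_def by auto
  qed
qed

lemma card_Sset: "card (Sset (adj::'a::finite\<Rightarrow>_) (Suc n) p x y s) = Qc adj (Suc n) p x y s"
proof (induction n arbitrary: p x y s)
  case 0
  then show ?case by (simp add: Sset_one)
next
  case (Suc n)
  have "card (Sset adj (Suc (Suc n)) p x y s) =
        (\<Sum>z\<in>{z. adj x z \<and> z \<noteq> p}. card (Cons x ` Sset adj (Suc n) x z y s))"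
    unfolding Sset_step
  proof (rule card_UN_disjoint)
    show "\<forall>i\<in>{z. adj x z \<and> z \<noteq> p}. \<forall>j\<in>{z. adj x z \<and> z \<noteq> p}. i \<noteq> j \<longrightarrow>
      Cons x ` Sset adj (Suc n) x i y s \<inter> Cons x ` Sset adj (Suc n) x j y s = {}"
      unfolding Sset_def by auto
  qed (auto simp: Sset_finite)
  also have "\<dots> = (\<Sum>z\<in>{z. adj x z \<and> z \<noteq> p}. Qc adj (Suc n) x z y s)"
    by (intro sum.cong refl) (simp add: card_image Suc.IH)
  also have "\<dots> = Qc adj (Suc (Suc n)) p x y s" by (rule Qc.simps(3)[symmetric])
  finally show ?case .
qed


locale rg =
  fixes adj :: "'a::finite \<Rightarrow> 'a \<Rightarrow> bool" and q :: nat
  assumes sym: "adj x y \<Longrightarrow> adj y x" and irr: "\<not> adj x x"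
    and degq: "card {y. adj x y} = q + 1"
begin

lemma geo_Sset: "geodesic_loops adj (Suc n) x = Sset adj (Suc n) x x x x"
proof (intro set_eqI iffI)
  fix vs assume H: "vs \<in> geodesic_loops adj (Suc n) x"
  then have l: "length vs = Suc (Suc n)" and h: "hd vs = x" and c: "last vs = x"
    and a: "\<forall>i. Suc i < length vs \<longrightarrow> adj (vs ! i) (vs ! Suc i)"
    and b: "\<not> has_backtracking vs"
    unfolding geodesic_loops_def is_path_def is_closed_def by auto
  have h0: "vs ! 0 = x" using h l by (metis hd_conv_nth list.size(3) nat.distinct(1))
  have hl: "vs ! Suc n = x" using c l by (metis last_conv_nth list.size(3) nat.distinct(1) diff_Suc_1)
  have "adj (vs!0) (vs!1)" using a l by simp
  then have n1: "vs ! 1 \<noteq> x" using h0 irr by auto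
  have "adj (vs!n) (vs!Suc n)" using a l by simp
  then have n2: "vs ! (Suc n - 1) \<noteq> x" using hl irr by auto
  show "vs \<in> Sset adj (Suc n) x x x x" unfolding Sset_def
    using l h c a b n1 n2 by (auto simp: has_backtracking_iff)
next
  fix vs assume H: "vs \<in> Sset adj (Suc n) x x x x"
  then show "vs \<in> geodesic_loops adj (Suc n) x"
    unfolding Sset_def geodesic_loops_def is_path_def is_closed_def
    by (auto simp: has_backtracking_iff)
qed

lemma c_count_Suc: "c_count adj (Suc n) x = Qc adj (Suc n) x x x x"
  unfolding c_count_def geo_Sset by (rule card_Sset)

lemma c_count_0: "c_count adj 0 x = 0"
proof -
  have "geodesic_loops adj 0 x = {}" unfolding geodesic_loops_def is_path_def by auto
  then show ?thesis unfolding c_count_def by simp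
qed

lemma closed_geo_Sset:
  "closed_geodesics adj (Suc (Suc n)) x = (\<Union>z\<in>{z. adj x z}. Cons x ` Sset adj (Suc n) x z x z)"
proof -
  have "closed_geodesics adj (Suc (Suc n)) x = {vs \<in> Sset adj (Suc (Suc n)) x x x x. vs ! Suc n \<noteq> vs ! 1}"
  proof -
    have "\<not> has_tail vs \<longleftrightarrow> vs ! Suc n \<noteq> vs ! 1" if "vs \<in> Sset adj (Suc (Suc n)) x x x x" for vs
    proof -
      from that have l: "length vs = Suc (Suc (Suc n))" and h: "hd vs = x" and c: "last vs = x"
        unfolding Sset_def by auto
      have h0: "vs ! 0 = x" using h l by (metis hd_conv_nth list.size(3) nat.distinct(1))
      have hl: "vs ! Suc (Suc n) = x" using c l by (metis last_conv_nth list.size(3) nat.distinct(1) diff_Suc_1)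
      show ?thesis unfolding has_tail_def Let_def using l h0 hl by auto
    qed
    then show ?thesis unfolding closed_geodesics_def geo_Sset by auto
  qed
  also have "\<dots> = (\<Union>z\<in>{z. adj x z}. Cons x ` Sset adj (Suc n) x z x z)"
  proof (intro set_eqI iffI)
    fix vs assume "vs \<in> {vs \<in> Sset adj (Suc (Suc n)) x x x x. vs ! Suc n \<noteq> vs ! 1}"
    then have A: "vs \<in> Sset adj (Suc (Suc n)) x x x x" and B: "vs ! Suc n \<noteq> vs ! 1" by auto
    from A[unfolded Sset_step] obtain z ws where z: "adj x z" "z \<noteq> x" and ws: "ws \<in> Sset adj (Suc n) x z x x"
      and vws: "vs = x # ws" by blast
    have "hd ws = z" "length ws = Suc (Suc n)" using ws unfolding Sset_def by auto
    then have "ws ! 0 = z" by (metis hd_conv_nth list.size(3) nat.distinct(1))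
    then have "ws ! n \<noteq> z" using B vws by simp
    then have "ws \<in> Sset adj (Suc n) x z x z" using ws unfolding Sset_def by auto
    then show "vs \<in> (\<Union>z\<in>{z. adj x z}. Cons x ` Sset adj (Suc n) x z x z)" using z vws by blast
  next
    fix vs assume "vs \<in> (\<Union>z\<in>{z. adj x z}. Cons x ` Sset adj (Suc n) x z x z)"
    then obtain z ws where z: "adj x z" and ws: "ws \<in> Sset adj (Suc n) x z x z"
      and vws: "vs = x # ws" by blast
    have hz: "hd ws = z" and lw: "length ws = Suc (Suc n)" and lst: "last ws = x"
      and aw: "\<forall>i. Suc i < length ws \<longrightarrow> adj (ws ! i) (ws ! Suc i)" and wn: "ws ! n \<noteq> z"
      using ws unfolding Sset_def by auto
    have w0: "ws ! 0 = z" using hz lw by (metis hd_conv_nth list.size(3) nat.distinct(1))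
    have wl: "ws ! Suc n = x" using lst lw by (metis last_conv_nth list.size(3) nat.distinct(1) diff_Suc_1)
    have "adj (ws ! n) (ws ! Suc n)" using aw lw by simp
    then have "ws ! n \<noteq> x" using wl irr by auto
    then have "ws \<in> Sset adj (Suc n) x z x x" using ws unfolding Sset_def by auto
    moreover have "z \<noteq> x" using z irr by auto
    ultimately have "vs \<in> Sset adj (Suc (Suc n)) x x x x" unfolding Sset_step using z vws by blast
    moreover have "vs ! Suc n \<noteq> vs ! 1" using vws w0 wn by simp
    ultimately show "vs \<in> {vs \<in> Sset adj (Suc (Suc n)) x x x x. vs ! Suc n \<noteq> vs ! 1}" by simp
  qed
  finally show ?thesis .
qed

lemma N_count_SS: "N_count adj (Suc (Suc n)) x = (\<Sum>z\<in>{z. adj x z}. Qc adj (Suc n) x z x z)"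
proof -
  have "N_count adj (Suc (Suc n)) x = (\<Sum>z\<in>{z. adj x z}. card (Cons x ` Sset adj (Suc n) x z x z))"
    unfolding N_count_def closed_geo_Sset
  proof (rule card_UN_disjoint)
    show "\<forall>i\<in>{z. adj x z}. \<forall>j\<in>{z. adj x z}. i \<noteq> j \<longrightarrow>
      Cons x ` Sset adj (Suc n) x i x i \<inter> Cons x ` Sset adj (Suc n) x j x j = {}"
      unfolding Sset_def by auto
  qed (auto simp: Sset_finite)
  also have "\<dots> = (\<Sum>z\<in>{z. adj x z}. Qc adj (Suc n) x z x z)"
    by (intro sum.cong refl) (simp add: card_image card_Sset)
  finally show ?thesis .
qed

lemma N_count_1: "N_count adj (Suc 0) x = 0"
proof -
  have "geodesic_loops adj (Suc 0) x = {}" unfolding geo_Sset Sset_one using irr by auto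
  then show ?thesis unfolding N_count_def closed_geodesics_def by simp
qed


lemma fin_nb[simp]: "finite {z. adj x z}" by simp
lemma nb_minus: "{z. adj x z \<and> z \<noteq> p} = {z. adj x z} - {p}" by auto
lemma nb_self: "{z. adj x z \<and> z \<noteq> x} = {z. adj x z}" using irr by auto

lemma sum_indic: "finite A \<Longrightarrow> (\<Sum>x\<in>A. if P x then 1 else 0 :: nat) = card {x\<in>A. P x}"
  by (simp add: sum.inter_filter[symmetric])

lemma Qc_last: "Qc adj (Suc (Suc k)) p x y s = (\<Sum>w\<in>{w. adj y w \<and> w \<noteq> s}. Qc adj (Suc k) p x w y)"
proof (induction k arbitrary: p x y s)
  case 0
  have "Qc adj (Suc (Suc 0)) p x y s = (\<Sum>z\<in>{z. adj x z \<and> z \<noteq> p}. if adj z y \<and> y \<noteq> x \<and> z \<noteq> s then 1 else 0)"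
    by simp
  also have "\<dots> = card {z. adj x z \<and> z \<noteq> p \<and> adj z y \<and> y \<noteq> x \<and> z \<noteq> s}"
    by (subst sum_indic) (auto intro: arg_cong[where f=card])
  also have "\<dots> = card {w. adj y w \<and> w \<noteq> s \<and> adj x w \<and> w \<noteq> p \<and> x \<noteq> y}"
    by (rule arg_cong[where f=card]) (auto intro: sym)
  also have "\<dots> = (\<Sum>w\<in>{w. adj y w \<and> w \<noteq> s}. if adj x w \<and> w \<noteq> p \<and> x \<noteq> y then 1 else 0)"
    by (subst sum_indic) (auto intro: arg_cong[where f=card])
  also have "\<dots> = (\<Sum>w\<in>{w. adj y w \<and> w \<noteq> s}. Qc adj (Suc 0) p x w y)" by simp
  finally show ?case .
next
  case (Suc k)
  have "Qc adj (Suc (Suc (Suc k))) p x y s = (\<Sum>z\<in>{z. adj x z \<and> z \<noteq> p}. Qc adj (Suc (Suc k)) x z y s)"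
    by simp
  also have "\<dots> = (\<Sum>z\<in>{z. adj x z \<and> z \<noteq> p}. \<Sum>w\<in>{w. adj y w \<and> w \<noteq> s}. Qc adj (Suc k) x z w y)"
    using Suc.IH by simp
  also have "\<dots> = (\<Sum>w\<in>{w. adj y w \<and> w \<noteq> s}. \<Sum>z\<in>{z. adj x z \<and> z \<noteq> p}. Qc adj (Suc k) x z w y)"
    by (rule sum.swap)
  also have "\<dots> = (\<Sum>w\<in>{w. adj y w \<and> w \<noteq> s}. Qc adj (Suc (Suc k)) p x w y)" by simp
  finally show ?case .
qed

lemma Qc_rev: "Qc adj (Suc k) p x y s = Qc adj (Suc k) s y x p"
proof (induction k arbitrary: p x y s)
  case 0
  show ?case using sym by auto
next
  case (Suc k)
  have "Qc adj (Suc (Suc k)) p x y s = (\<Sum>z\<in>{z. adj x z \<and> z \<noteq> p}. Qc adj (Suc k) x z y s)"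
    by simp
  also have "\<dots> = (\<Sum>z\<in>{z. adj x z \<and> z \<noteq> p}. Qc adj (Suc k) s y z x)"
    using Suc.IH by simp
  also have "\<dots> = Qc adj (Suc (Suc k)) s y x p" by (simp only: Qc_last)
  finally show ?case .
qed

lemma sum_split_at: "adj y z \<Longrightarrow> (\<Sum>w\<in>{w. adj y w}. f w) = f z + (\<Sum>w\<in>{w. adj y w \<and> w \<noteq> z}. f w)"
  by (simp add: nb_minus sum.remove)

lemma decompA: "Qc adj (Suc (Suc (Suc n))) x x x x =
  (\<Sum>z\<in>{z. adj x z}. Qc adj (Suc n) x z z x) + (\<Sum>z\<in>{z. adj x z}. Qc adj (Suc (Suc n)) x z x z)"
proof -
  have "Qc adj (Suc (Suc (Suc n))) x x x x = (\<Sum>z\<in>{z. adj x z}. Qc adj (Suc (Suc n)) x z x x)"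
    by (simp add: nb_self)
  also have "\<dots> = (\<Sum>z\<in>{z. adj x z}. Qc adj (Suc n) x z z x + Qc adj (Suc (Suc n)) x z x z)"
  proof (intro sum.cong refl)
    fix z assume "z \<in> {z. adj x z}"
    then have z: "adj x z" by simp
    have "Qc adj (Suc (Suc n)) x z x x = (\<Sum>v\<in>{v. adj x v}. Qc adj (Suc n) x z v x)"
      by (simp only: Qc_last nb_self)
    also have "\<dots> = Qc adj (Suc n) x z z x + (\<Sum>v\<in>{v. adj x v \<and> v \<noteq> z}. Qc adj (Suc n) x z v x)"
      using z by (rule sum_split_at)
    also have "\<dots> = Qc adj (Suc n) x z z x + Qc adj (Suc (Suc n)) x z x z"
      by (simp only: Qc_last)
    finally show "Qc adj (Suc (Suc n)) x z x x = Qc adj (Suc n) x z z x + Qc adj (Suc (Suc n)) x z x z" .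
  qed
  finally show ?thesis by (simp add: sum.distrib)
qed

lemma decompB: assumes "adj x z"
  shows "Qc adj (Suc (Suc n)) z z z z = Qc adj (Suc (Suc n)) x z z x + Qc adj (Suc n) z x z z + Qc adj (Suc n) x z x z"
proof -
  have zx: "adj z x" using assms sym by blast
  have "Qc adj (Suc (Suc n)) z z z z = (\<Sum>w\<in>{w. adj z w}. Qc adj (Suc n) z w z z)"
    by (simp add: nb_self)
  also have "\<dots> = Qc adj (Suc n) z x z z + (\<Sum>w\<in>{w. adj z w \<and> w \<noteq> x}. Qc adj (Suc n) z w z z)"
    using zx by (rule sum_split_at)
  also have "(\<Sum>w\<in>{w. adj z w \<and> w \<noteq> x}. Qc adj (Suc n) z w z z) = Qc adj (Suc (Suc n)) x z z z"
    by simp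
  also have "Qc adj (Suc (Suc n)) x z z z = (\<Sum>w\<in>{w. adj z w}. Qc adj (Suc n) x z w z)"
    by (simp only: Qc_last nb_self)
  also have "\<dots> = Qc adj (Suc n) x z x z + (\<Sum>w\<in>{w. adj z w \<and> w \<noteq> x}. Qc adj (Suc n) x z w z)"
    using zx by (rule sum_split_at)
  also have "(\<Sum>w\<in>{w. adj z w \<and> w \<noteq> x}. Qc adj (Suc n) x z w z) = Qc adj (Suc (Suc n)) x z z x"
    by (simp only: Qc_last)
  finally show ?thesis by simp
qed

lemma decompC: assumes "adj x z"
  shows "Qc adj (Suc (Suc n)) z x z z = Qc adj (Suc (Suc n)) z x z x + Qc adj (Suc n) z x x z"
proof -
  have zx: "adj z x" using assms sym by blast
  have "Qc adj (Suc (Suc n)) z x z z = (\<Sum>v\<in>{v. adj z v}. Qc adj (Suc n) z x v z)"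
    by (simp only: Qc_last nb_self)
  also have "\<dots> = Qc adj (Suc n) z x x z + (\<Sum>v\<in>{v. adj z v \<and> v \<noteq> x}. Qc adj (Suc n) z x v z)"
    using zx by (rule sum_split_at)
  also have "(\<Sum>v\<in>{v. adj z v \<and> v \<noteq> x}. Qc adj (Suc n) z x v z) = Qc adj (Suc (Suc n)) z x z x"
    by (simp only: Qc_last)
  finally show ?thesis by simp
qed

lemma double_excl:
  fixes F :: "'b \<Rightarrow> 'b \<Rightarrow> int"
  assumes "finite B"
  shows "(\<Sum>z\<in>B. \<Sum>a\<in>B-{z}. \<Sum>b\<in>B-{z}. F a b)
     = (int (card B) - 2) * (\<Sum>a\<in>B. \<Sum>b\<in>B. F a b) + (\<Sum>a\<in>B. F a a)"
proof -
  let ?S = "\<Sum>a\<in>B. \<Sum>b\<in>B. F a b"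
  have "(\<Sum>a\<in>B-{z}. \<Sum>b\<in>B-{z}. F a b) = ?S - (\<Sum>b\<in>B. F z b) - (\<Sum>a\<in>B. F a z) + F z z"
    if z: "z \<in> B" for z
  proof -
    have "(\<Sum>a\<in>B-{z}. \<Sum>b\<in>B-{z}. F a b) = (\<Sum>a\<in>B-{z}. (\<Sum>b\<in>B. F a b) - F a z)"
      using assms z by (simp add: sum_diff1)
    also have "\<dots> = (\<Sum>a\<in>B-{z}. \<Sum>b\<in>B. F a b) - (\<Sum>a\<in>B-{z}. F a z)"
      by (simp add: sum_subtractf)
    also have "\<dots> = (?S - (\<Sum>b\<in>B. F z b)) - ((\<Sum>a\<in>B. F a z) - F z z)"
      using assms z by (simp add: sum_diff1)
    finally show ?thesis by simp
  qed
  then have "(\<Sum>z\<in>B. \<Sum>a\<in>B-{z}. \<Sum>b\<in>B-{z}. F a b)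
      = (\<Sum>z\<in>B. ?S - (\<Sum>b\<in>B. F z b) - (\<Sum>a\<in>B. F a z) + F z z)"
    by (rule sum.cong[OF refl])
  also have "\<dots> = int (card B) * ?S - ?S - (\<Sum>z\<in>B. \<Sum>a\<in>B. F a z) + (\<Sum>z\<in>B. F z z)"
    by (simp add: sum.distrib sum_subtractf)
  also have "(\<Sum>z\<in>B. \<Sum>a\<in>B. F a z) = ?S" by (rule sum.swap)
  finally show ?thesis by (simp add: algebra_simps)
qed


definition cQ :: "nat \<Rightarrow> 'a \<Rightarrow> int" where "cQ k x = int (Qc adj k x x x x)"
definition Tf :: "nat \<Rightarrow> 'a \<Rightarrow> int" where "Tf m x = (\<Sum>z\<in>{z. adj x z}. int (Qc adj (m - 2) x z z x))"

lemma cQ_1: "cQ (Suc 0) x = 0" unfolding cQ_def by simp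
lemma cQ_2: "cQ (Suc (Suc 0)) x = 0" unfolding cQ_def by simp
lemma Tf_small: "m \<le> 2 \<Longrightarrow> Tf m x = 0" unfolding Tf_def by simp
lemma Tf_3: "Tf 3 x = 0" unfolding Tf_def using irr by (simp add: numeral_3_eq_3)
lemma Tf_4: "Tf 4 x = 0" unfolding Tf_def by (simp add: numeral_Bit0 eval_nat_numeral)

lemma c_count_cQ: "int (c_count adj k x) = cQ k x"
  by (cases k) (simp_all add: c_count_0 c_count_Suc cQ_def)

lemma N_count_cQ: "m \<ge> 1 \<Longrightarrow> int (N_count adj m x) = cQ m x - Tf m x"
proof -
  assume m: "m \<ge> 1"
  consider "m = 1" | "m = 2" | n where "m = Suc (Suc (Suc n))" using m
    by (metis One_nat_def Suc_le_D le_SucE le_zero_eq not_less_eq_eq numeral_2_eq_2)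
  then show ?thesis
  proof cases
    case 1 then show ?thesis by (simp add: N_count_1 cQ_1 Tf_small)
  next
    case 2 then show ?thesis by (simp add: N_count_SS cQ_2 Tf_small numeral_2_eq_2)
  next
    case 3
    have "int (Qc adj (Suc (Suc (Suc n))) x x x x) = Tf m x + int (N_count adj m x)"
      unfolding 3 Tf_def N_count_SS decompA by simp
    then show ?thesis unfolding cQ_def 3 by simp
  qed
qed

lemma lemE: "j \<ge> 1 \<Longrightarrow> (\<Sum>z\<in>{z. adj x z}. int (Qc adj j z x x z)) = (int q - 1) * cQ j x + Tf j x"
proof -
  assume j: "j \<ge> 1"
  consider "j = 1" | "j = 2" | n where "j = Suc (Suc (Suc n))" using j
    by (metis One_nat_def Suc_le_D le_SucE le_zero_eq not_less_eq_eq numeral_2_eq_2)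
  then show ?thesis
  proof cases
    case 1 then show ?thesis using irr by (simp add: cQ_1 Tf_small)
  next
    case 2 then show ?thesis by (simp add: cQ_2 Tf_small numeral_2_eq_2)
  next
    case 3
    let ?B = "{z. adj x z}"
    let ?F = "\<lambda>a b. int (Qc adj (Suc n) x a b x)"
    have "(\<Sum>z\<in>?B. int (Qc adj j z x x z)) = (\<Sum>z\<in>?B. \<Sum>a\<in>?B-{z}. \<Sum>b\<in>?B-{z}. ?F a b)"
    proof (intro sum.cong refl)
      fix z
      have "Qc adj j z x x z = (\<Sum>a\<in>?B-{z}. Qc adj (Suc (Suc n)) x a x z)"
        unfolding 3 by (simp add: nb_minus)
      also have "\<dots> = (\<Sum>a\<in>?B-{z}. \<Sum>b\<in>?B-{z}. Qc adj (Suc n) x a b x)"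
        by (simp only: Qc_last nb_minus)
      finally show "int (Qc adj j z x x z) = (\<Sum>a\<in>?B-{z}. \<Sum>b\<in>?B-{z}. ?F a b)" by simp
    qed
    also have "\<dots> = (int (card ?B) - 2) * (\<Sum>a\<in>?B. \<Sum>b\<in>?B. ?F a b) + (\<Sum>a\<in>?B. ?F a a)"
      by (rule double_excl) simp
    also have "(\<Sum>a\<in>?B. \<Sum>b\<in>?B. ?F a b) = cQ j x"
    proof -
      have "Qc adj j x x x x = (\<Sum>a\<in>?B. Qc adj (Suc (Suc n)) x a x x)"
        unfolding 3 by (simp add: nb_self)
      also have "\<dots> = (\<Sum>a\<in>?B. \<Sum>b\<in>?B. Qc adj (Suc n) x a b x)"
        by (simp only: Qc_last nb_self)
      finally show ?thesis unfolding cQ_def by simp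
    qed
    also have "(\<Sum>a\<in>?B. ?F a a) = Tf j x" unfolding Tf_def 3 by simp
    finally show ?thesis by (simp add: degq)
  qed
qed

lemma recT: "Tf (n + 5) x = (\<Sum>z\<in>{z. adj x z}. cQ (n+3) z) - 2 * cQ (n+3) x + 2 * Tf (n+3) x
   - (int q - 1) * cQ (n+1) x - Tf (n+1) x"
proof -
  let ?B = "{z. adj x z}"
  have N3: "(\<Sum>z\<in>?B. int (Qc adj (Suc (Suc n)) x z x z)) = cQ (n+3) x - Tf (n+3) x"
  proof -
    have "int (N_count adj (n+3) x) = cQ (n+3) x - Tf (n+3) x" by (rule N_count_cQ) simp
    moreover have "N_count adj (n+3) x = (\<Sum>z\<in>?B. Qc adj (Suc (Suc n)) x z x z)"
      using N_count_SS[of "Suc n" x] by (simp add: numeral_3_eq_3)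
    ultimately show ?thesis by simp
  qed
  have "Tf (n+5) x = (\<Sum>z\<in>?B. int (Qc adj (Suc (Suc (Suc n))) x z z x))"
    unfolding Tf_def by (simp add: eval_nat_numeral)
  also have "\<dots> = (\<Sum>z\<in>?B. cQ (n+3) z - int (Qc adj (Suc (Suc n)) z x z z) - int (Qc adj (Suc (Suc n)) x z x z))"
  proof (intro sum.cong refl)
    fix z assume "z \<in> ?B"
    then have "adj x z" by simp
    from decompB[OF this, of "Suc n"] show "int (Qc adj (Suc (Suc (Suc n))) x z z x) =
      cQ (n+3) z - int (Qc adj (Suc (Suc n)) z x z z) - int (Qc adj (Suc (Suc n)) x z x z)"
      unfolding cQ_def by (simp add: eval_nat_numeral)
  qed
  also have "\<dots> = (\<Sum>z\<in>?B. cQ (n+3) z) - (\<Sum>z\<in>?B. int (Qc adj (Suc (Suc n)) z x z z))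
       - (\<Sum>z\<in>?B. int (Qc adj (Suc (Suc n)) x z x z))"
    by (simp add: sum_subtractf)
  also have "(\<Sum>z\<in>?B. int (Qc adj (Suc (Suc n)) z x z z)) =
      (\<Sum>z\<in>?B. int (Qc adj (Suc (Suc n)) x z x z)) + (\<Sum>z\<in>?B. int (Qc adj (Suc n) z x x z))"
  proof -
    have "(\<Sum>z\<in>?B. int (Qc adj (Suc (Suc n)) z x z z)) =
      (\<Sum>z\<in>?B. int (Qc adj (Suc (Suc n)) x z x z) + int (Qc adj (Suc n) z x x z))"
    proof (intro sum.cong refl)
      fix z assume "z \<in> ?B"
      then have "adj x z" by simp
      from decompC[OF this, of n] Qc_rev[of "Suc n" z x z x]
      show "int (Qc adj (Suc (Suc n)) z x z z) = int (Qc adj (Suc (Suc n)) x z x z) + int (Qc adj (Suc n) z x x z)"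
        by simp
    qed
    then show ?thesis by (simp add: sum.distrib)
  qed
  also have "(\<Sum>z\<in>?B. int (Qc adj (Suc n) z x x z)) = (int q - 1) * cQ (n+1) x + Tf (n+1) x"
    using lemE[of "Suc n" x] by simp
  finally show ?thesis using N3 by simp
qed


definition Lc :: "nat \<Rightarrow> 'a \<Rightarrow> int" where
  "Lc k x = laplacian adj (\<lambda>x. int (c_count adj k x)) x"
definition Sc :: "nat \<Rightarrow> 'a \<Rightarrow> int" where
  "Sc m x = (\<Sum>j = 1..(m + 1) div 2 - 1. cQ (m - 2 * j) x)"
definition Hc :: "nat \<Rightarrow> 'a \<Rightarrow> int" where
  "Hc m x = (\<Sum>j = 1..(m + 1) div 2 - 1. Lc (m - 2 * j) x)"

lemma Lc_eq: "Lc k x = (int q + 1) * cQ k x - (\<Sum>z\<in>{z. adj x z}. cQ k z)"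
  unfolding Lc_def laplacian_def deg_def degq by (simp add: c_count_cQ)

lemma sum_shiftJ: "(\<Sum>j = 1..Suc K. f j) = f (1::nat) + (\<Sum>j = 1..K. f (Suc j))"
proof -
  have "(\<Sum>j = 1..Suc K. f j) = f 1 + (\<Sum>j = Suc 1..Suc K. f j)"
    by (rule sum.atLeast_Suc_atMost) simp
  also have "(\<Sum>j = Suc 1..Suc K. f j) = (\<Sum>j = 1..K. f (Suc j))"
    by (rule sum.shift_bounds_cl_Suc_ivl)
  finally show ?thesis .
qed

lemma J_step: "m \<ge> 1 \<Longrightarrow> (m + 2 + 1) div 2 - 1 = Suc ((m + 1) div 2 - 1)"
  by simp

lemma sumJ: fixes m :: nat assumes "m \<ge> 1"
  shows "(\<Sum>j = 1..(m + 2 + 1) div 2 - 1. h (m + 2 - 2 * j)) = h m + (\<Sum>j = 1..(m + 1) div 2 - 1. h (m - 2 * j))"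
  unfolding J_step[OF assms] sum_shiftJ by simp

lemma sumJw: fixes m :: nat assumes "m \<ge> 1"
  shows "(\<Sum>j = 1..(m + 2 + 1) div 2 - 1. int j * h (m + 2 - 2 * j)) = h m
     + (\<Sum>j = 1..(m + 1) div 2 - 1. int j * h (m - 2 * j)) + (\<Sum>j = 1..(m + 1) div 2 - 1. h (m - 2 * j))"
  unfolding J_step[OF assms] sum_shiftJ by (simp add: algebra_simps sum.distrib)

lemma Sc_step: "m \<ge> 1 \<Longrightarrow> Sc (m + 2) x = cQ m x + Sc m x"
  unfolding Sc_def by (rule sumJ)
lemma Hc_step: "m \<ge> 1 \<Longrightarrow> Hc (m + 2) x = Lc m x + Hc m x"
  unfolding Hc_def by (rule sumJ)
lemma R_step: "m \<ge> 1 \<Longrightarrow> R_term adj (m + 2) x = Lc m x + R_term adj m x + Hc m x"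
  unfolding R_term_def Hc_def Lc_def[abs_def] by (rule sumJw)

lemma Lc_1: "Lc (Suc 0) x = 0" unfolding Lc_eq by (simp add: cQ_1)
lemma Lc_2: "Lc (Suc (Suc 0)) x = 0" unfolding Lc_eq by (simp add: cQ_2)

lemma T_closed: "Tf m x = (int q - 1) * Sc m x - R_term adj m x"
proof (induction m rule: less_induct)
  case (less m)
  show ?case
  proof (cases "m \<le> 4")
    case True
    then consider "m \<le> 2" | "m = 3" | "m = 4" by linarith
    then show ?thesis
    proof cases
      case 1
      then have "(m + 1) div 2 - 1 = 0" by auto
      then show ?thesis using 1 by (simp add: Tf_small Sc_def R_term_def)
    next
      case 2
      have j: "(m + 1) div 2 - 1 = 1" using 2 by simp
      have "m - 2 = Suc 0" using 2 by simp
      then show ?thesis unfolding Sc_def R_term_def j using 2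
        by (simp add: Tf_3 cQ_1 Lc_1[unfolded Lc_def])
    next
      case 3
      have j: "(m + 1) div 2 - 1 = 1" using 3 by simp
      have "m - 2 = Suc (Suc 0)" using 3 by simp
      then show ?thesis unfolding Sc_def R_term_def j using 3
        using cQ_2[of x] Lc_2[unfolded Lc_def, of x] by (simp add: Tf_4 numeral_2_eq_2)
    qed
  next
    case False
    then obtain n where m: "m = n + 5" by (metis add.commute le_Suc_ex not_less_eq_eq numeral_eq_Suc pred_numeral_simps(3) Suc_eq_plus1)
    have IH3: "Tf (n+3) x = (int q - 1) * Sc (n+3) x - R_term adj (n+3) x" using less m by simp
    have IH1: "Tf (n+1) x = (int q - 1) * Sc (n+1) x - R_term adj (n+1) x" using less m by simp
    have s1: "Sc (n+5) x = cQ (n+3) x + Sc (n+3) x" using Sc_step[of "n+3" x] by (simp add: eval_nat_numeral)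
    have s2: "Sc (n+3) x = cQ (n+1) x + Sc (n+1) x" using Sc_step[of "n+1" x] by (simp add: eval_nat_numeral)
    have r1: "R_term adj (n+5) x = Lc (n+3) x + R_term adj (n+3) x + Hc (n+3) x"
      using R_step[of "n+3" x] by (simp add: eval_nat_numeral)
    have r2: "R_term adj (n+3) x = Lc (n+1) x + R_term adj (n+1) x + Hc (n+1) x"
      using R_step[of "n+1" x] by (simp add: eval_nat_numeral)
    have h1: "Hc (n+3) x = Lc (n+1) x + Hc (n+1) x"
      using Hc_step[of "n+1" x] by (simp add: eval_nat_numeral)
    have l: "(\<Sum>z\<in>{z. adj x z}. cQ (n+3) z) = (int q + 1) * cQ (n+3) x - Lc (n+3) x"
      using Lc_eq[of "n+3" x] by simp
    show ?thesis unfolding m recT l IH3 IH1 s1 s2 r1 r2 h1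
      by (simp add: algebra_simps)
  qed
qed


lemma N_closed: "m \<ge> 1 \<Longrightarrow> int (N_count adj m x) = cQ m x - (int q - 1) * Sc m x + R_term adj m x"
  using N_count_cQ[of m x] T_closed[of m x] by simp

definition Aop :: "('a \<Rightarrow> 'b::comm_ring_1) \<Rightarrow> 'a \<Rightarrow> 'b" where
  "Aop f y = (\<Sum>z\<in>{z. adj y z}. f z)"

lemma Aop_diff: "Aop (\<lambda>y. f y - g y) y = Aop f y - Aop g y"
  unfolding Aop_def by (simp add: sum_subtractf)
lemma Aop_add: "Aop (\<lambda>y. f y + g y) y = Aop f y + Aop g y"
  unfolding Aop_def by (simp add: sum.distrib)
lemma Aop_scale: "Aop (\<lambda>y. c * f y) y = c * Aop f y"
  unfolding Aop_def by (simp add: sum_distrib_left)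

lemma single_excl:
  fixes G :: "'b \<Rightarrow> int"
  assumes "finite B"
  shows "(\<Sum>z\<in>B. \<Sum>w\<in>B-{z}. G w) = (int (card B) - 1) * (\<Sum>w\<in>B. G w)"
proof -
  have "(\<Sum>z\<in>B. \<Sum>w\<in>B-{z}. G w) = (\<Sum>z\<in>B. (\<Sum>w\<in>B. G w) - G z)"
    by (rule sum.cong[OF refl]) (simp add: sum_diff1 assms)
  also have "\<dots> = int (card B) * (\<Sum>w\<in>B. G w) - (\<Sum>w\<in>B. G w)"
    by (simp add: sum_subtractf)
  finally show ?thesis by (simp add: algebra_simps)
qed

end

locale rgx = rg + fixes x0 :: 'a
begin

definition uu :: "nat \<Rightarrow> 'a \<Rightarrow> int" where
  "uu k y = (if k = 0 then (if y = x0 then 1 else 0) else int (Qc adj k y y x0 x0))"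

lemma uu_1: "uu 1 y = Aop (uu 0) y"
proof -
  have "uu 1 y = (if adj y x0 then 1 else 0)" unfolding uu_def using irr by auto
  also have "\<dots> = Aop (uu 0) y" unfolding Aop_def uu_def
    by (simp add: sum.If_cases Int_def)
  finally show ?thesis .
qed

lemma uu_step_pre: assumes "m \<ge> 1"
  shows "uu (Suc m) y = (\<Sum>z\<in>{z. adj y z}. int (Qc adj m y z x0 x0))"
proof -
  obtain k where m: "m = Suc k" using assms by (cases m) auto
  show ?thesis unfolding uu_def m by (simp add: nb_self)
qed

lemma uu_2: "uu 2 y = Aop (uu 1) y - (int q + 1) * uu 0 y"
proof (cases "y = x0")
  case True
  have "uu 2 y = 0" unfolding uu_def True by (simp add: numeral_2_eq_2)
  moreover have "Aop (uu 1) y = int q + 1"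
  proof -
    have "Aop (uu 1) y = (\<Sum>z\<in>{z. adj y z}. 1)"
      unfolding Aop_def uu_def True using irr sym by (intro sum.cong refl) auto
    then show ?thesis using degq by simp
  qed
  ultimately show ?thesis using True by (simp add: uu_def)
next
  case False
  have "uu 2 y = (\<Sum>z\<in>{z. adj y z}. int (Qc adj 1 y z x0 x0))"
    using uu_step_pre[of 1 y] by (simp add: numeral_2_eq_2)
  also have "\<dots> = Aop (uu 1) y" unfolding Aop_def uu_def
    using False irr by (intro sum.cong refl) auto
  finally show ?thesis using False by (simp add: uu_def)
qed

lemma uu_rec: assumes "m \<ge> 2"
  shows "uu (Suc m) y = Aop (uu m) y - int q * uu (m - 1) y"
proof -
  obtain k where m: "m = Suc (Suc k)" using assms by (metis add_2_eq_Suc le_Suc_ex)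
  have "uu (Suc m) y = (\<Sum>z\<in>{z. adj y z}. int (Qc adj m y z x0 x0))"
    by (rule uu_step_pre) (simp add: m)
  also have "\<dots> = (\<Sum>z\<in>{z. adj y z}. uu m z - int (Qc adj (Suc k) z y x0 x0))"
  proof (intro sum.cong refl)
    fix z assume "z \<in> {z. adj y z}"
    then have zy: "adj z y" using sym by auto
    have "Qc adj m z z x0 x0 = (\<Sum>w\<in>{w. adj z w}. Qc adj (Suc k) z w x0 x0)"
      unfolding m by (simp add: nb_self)
    also have "\<dots> = Qc adj (Suc k) z y x0 x0 + (\<Sum>w\<in>{w. adj z w \<and> w \<noteq> y}. Qc adj (Suc k) z w x0 x0)"
      using zy by (rule sum_split_at)
    also have "(\<Sum>w\<in>{w. adj z w \<and> w \<noteq> y}. Qc adj (Suc k) z w x0 x0) = Qc adj m y z x0 x0"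
      unfolding m by simp
    finally show "int (Qc adj m y z x0 x0) = uu m z - int (Qc adj (Suc k) z y x0 x0)"
      unfolding uu_def m by simp
  qed
  also have "\<dots> = Aop (uu m) y - (\<Sum>z\<in>{z. adj y z}. int (Qc adj (Suc k) z y x0 x0))"
    unfolding Aop_def by (simp add: sum_subtractf)
  also have "(\<Sum>z\<in>{z. adj y z}. int (Qc adj (Suc k) z y x0 x0)) = int q * uu (m - 1) y"
  proof (cases k)
    case 0
    have "(\<Sum>z\<in>{z. adj y z}. int (Qc adj (Suc k) z y x0 x0)) =
          (\<Sum>z\<in>{z. adj y z}. if adj y x0 then (if z \<noteq> x0 then 1 else 0) else 0)"
      unfolding 0 using irr by (intro sum.cong refl) auto
    also have "\<dots> = (if adj y x0 then int (card ({z. adj y z} - {x0})) else 0)"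
      by (simp add: sum.If_cases Int_def Diff_eq)
    also have "\<dots> = (if adj y x0 then int q else 0)" using degq by (simp add: card_Diff_singleton)
    also have "\<dots> = int q * uu (m - 1) y" unfolding uu_def m 0 using irr by auto
    finally show ?thesis .
  next
    case (Suc k')
    have "(\<Sum>z\<in>{z. adj y z}. int (Qc adj (Suc k) z y x0 x0)) =
          (\<Sum>z\<in>{z. adj y z}. \<Sum>w\<in>{w. adj y w} - {z}. int (Qc adj k y w x0 x0))"
      unfolding Suc by (intro sum.cong refl) (simp add: nb_minus)
    also have "\<dots> = (int (card {w. adj y w}) - 1) * (\<Sum>w\<in>{w. adj y w}. int (Qc adj k y w x0 x0))"
      by (rule single_excl) simp
    also have "(\<Sum>w\<in>{w. adj y w}. int (Qc adj k y w x0 x0)) = uu (m - 1) y"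
      using uu_step_pre[of k y] unfolding m Suc by simp
    finally show ?thesis using degq by simp
  qed
  finally show ?thesis .
qed

fun gv :: "nat \<Rightarrow> 'a \<Rightarrow> int" where
  "gv 0 y = 2 * uu 0 y"
| "gv (Suc 0) y = Aop (uu 0) y"
| "gv (Suc (Suc k)) y = Aop (gv (Suc k)) y - int q * gv k y"

fun Kv :: "nat \<Rightarrow> 'a \<Rightarrow> int" where
  "Kv 0 y = 0"
| "Kv (Suc 0) y = 0"
| "Kv (Suc (Suc k)) y = uu k y + Kv k y"

lemma lemZ: "m \<ge> 1 \<Longrightarrow> Aop (Kv (Suc m)) y = (int q + 1) * Kv m y + uu m y"
proof (induction m arbitrary: y rule: less_induct)
  case (less m)
  consider "m = 1" | "m = 2" | k where "m = Suc (Suc k)" "k \<ge> 1" using less.prems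
    by (metis One_nat_def Suc_le_D le_SucE le_zero_eq not_less_eq_eq numeral_2_eq_2 Suc_le_eq)
  then show ?case
  proof cases
    case 1
    have "Kv (Suc m) = uu 0" unfolding 1 by (simp add: fun_eq_iff numeral_2_eq_2)
    then show ?thesis using uu_1 1 by simp
  next
    case 2
    have "Kv (Suc m) = uu 1" using 2 by (simp add: fun_eq_iff numeral_3_eq_3)
    then show ?thesis using uu_2[of y] 2 by (simp add: numeral_2_eq_2)
  next
    case 3
    have "Kv (Suc m) = (\<lambda>y. uu (Suc k) y + Kv (Suc k) y)" unfolding 3 by (simp add: fun_eq_iff)
    then have "Aop (Kv (Suc m)) y = Aop (\<lambda>y. uu (Suc k) y + Kv (Suc k) y) y" by simp
    also have "\<dots> = Aop (uu (Suc k)) y + Aop (Kv (Suc k)) y" by (rule Aop_add)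
    also have "Aop (uu (Suc k)) y = uu (Suc (Suc k)) y + int q * uu k y"
      using uu_rec[of "Suc k" y] 3 by simp
    also have "Aop (Kv (Suc k)) y = (int q + 1) * Kv k y + uu k y"
      using less.IH[of k y] 3 by simp
    finally show ?thesis unfolding 3 by (simp add: algebra_simps)
  qed
qed

lemma gv_closed: "m \<ge> 1 \<Longrightarrow> gv m y = uu m y - (int q - 1) * Kv m y"
proof (induction m arbitrary: y rule: less_induct)
  case (less m)
  consider "m = 1" | "m = 2" | k where "m = Suc (Suc k)" "k \<ge> 1" using less.prems
    by (metis One_nat_def Suc_le_D le_SucE le_zero_eq not_less_eq_eq numeral_2_eq_2 Suc_le_eq)
  then show ?case
  proof cases
    case 1 then show ?thesis using uu_1[of y] by simp
  next
    case 2
    have g1: "gv 1 = uu 1" using uu_1 by (simp add: fun_eq_iff)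
    have "gv 2 y = Aop (gv 1) y - int q * gv 0 y" by (simp add: numeral_2_eq_2)
    then show ?thesis using uu_2[of y] 2 g1 by (simp add: numeral_2_eq_2 algebra_simps)
  next
    case 3
    have e1: "gv (Suc k) = (\<lambda>y. uu (Suc k) y - (int q - 1) * Kv (Suc k) y)"
      using less.IH[of "Suc k"] 3 by (simp add: fun_eq_iff)
    have e0: "gv k y = uu k y - (int q - 1) * Kv k y" using less.IH[of k] 3 by simp
    have "gv m y = Aop (gv (Suc k)) y - int q * gv k y" unfolding 3 by simp
    also have "Aop (gv (Suc k)) y = Aop (uu (Suc k)) y - (int q - 1) * Aop (Kv (Suc k)) y"
      unfolding e1 Aop_diff Aop_scale ..
    also have "Aop (uu (Suc k)) y = uu (Suc (Suc k)) y + int q * uu k y"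
      using uu_rec[of "Suc k" y] 3 by simp
    also have "Aop (Kv (Suc k)) y = (int q + 1) * Kv k y + uu k y"
      using lemZ[of k y] 3 by simp
    finally show ?thesis unfolding e0 3 by (simp add: algebra_simps)
  qed
qed

lemma Kv_x0: "m \<ge> 1 \<Longrightarrow> Kv m x0 = Sc m x0 + (if even m then 1 else 0)"
proof (induction m rule: less_induct)
  case (less m)
  consider "m = 1" | "m = 2" | k where "m = Suc (Suc k)" "k \<ge> 1" using less.prems
    by (metis One_nat_def Suc_le_D le_SucE le_zero_eq not_less_eq_eq numeral_2_eq_2 Suc_le_eq)
  then show ?case
  proof cases
    case 1 then show ?thesis by (simp add: Sc_def)
  next
    case 2 then show ?thesis by (simp add: Sc_def uu_def cQ_def numeral_2_eq_2)
  next
    case 3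
    have "Kv m x0 = uu k x0 + Kv k x0" unfolding 3 by simp
    also have "uu k x0 = cQ k x0" unfolding uu_def cQ_def using 3 by simp
    also have "Kv k x0 = Sc k x0 + (if even k then 1 else 0)" using less.IH[of k] 3 by simp
    also have "Sc m x0 = cQ k x0 + Sc k x0" using Sc_step[of k x0] 3 by simp
    ultimately show ?thesis using 3 by simp
  qed
qed

theorem comb_main: "m \<ge> 1 \<Longrightarrow>
   int (N_count adj m x0) = gv m x0 + (if even m then int q - 1 else 0) + R_term adj m x0"
proof -
  assume m: "m \<ge> 1"
  have "uu m x0 = cQ m x0" unfolding uu_def cQ_def using m by simp
  moreover note N_closed[OF m, of x0] gv_closed[OF m, of x0] Kv_x0[OF m]
  ultimately show ?thesis
    by (cases "even m") (simp_all add: algebra_simps)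
qed


lemma Qc_bound: "Qc adj k p x y s \<le> (q+1)^k"
proof (induction k arbitrary: p x y s rule: less_induct)
  case (less k)
  show ?case
  proof (cases k)
    case 0 then show ?thesis by simp
  next
    case (Suc k1)
    show ?thesis
    proof (cases k1)
      case 0 then show ?thesis using Suc by simp
    next
      case (Suc k2)
      have "Qc adj k p x y s = (\<Sum>z\<in>{z. adj x z \<and> z \<noteq> p}. Qc adj (Suc k2) x z y s)"
        using \<open>k = Suc k1\<close> Suc by simp
      also have "\<dots> \<le> (\<Sum>z\<in>{z. adj x z \<and> z \<noteq> p}. (q+1)^(Suc k2))"
      proof (rule sum_mono)
        fix z show "Qc adj (Suc k2) x z y s \<le> (q+1)^(Suc k2)"
          using less.IH[of "Suc k2" x z y s] \<open>k = Suc k1\<close> Suc by simp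
      qed
      also have "\<dots> = card {z. adj x z \<and> z \<noteq> p} * (q+1)^(Suc k2)" by simp
      also have "\<dots> \<le> (q+1) * (q+1)^(Suc k2)"
      proof (rule mult_right_mono)
        have "card {z. adj x z \<and> z \<noteq> p} \<le> card {z. adj x z}" by (rule card_mono) auto
        then show "card {z. adj x z \<and> z \<noteq> p} \<le> q + 1" using degq by simp
      qed simp
      also have "\<dots> = (q+1)^k" using \<open>k = Suc k1\<close> Suc by simp
      finally show ?thesis .
    qed
  qed
qed

lemma N_bound: "N_count adj m x \<le> (q+1)^m"
proof -
  have "N_count adj m x \<le> c_count adj m x"
    unfolding N_count_def c_count_def closed_geodesics_def
  proof (rule card_mono)
    show "finite (geodesic_loops adj m x)"
    proof (cases m)
      case 0
      then have "geodesic_loops adj m x = {}" unfolding geodesic_loops_def is_path_def by auto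
      then show ?thesis by simp
    next
      case (Suc n) then show ?thesis by (simp add: geo_Sset Sset_finite)
    qed
  qed auto
  also have "\<dots> \<le> (q+1)^m"
    using c_count_cQ[of m x] Qc_bound[of m x x x x] unfolding cQ_def by simp
  finally show ?thesis .
qed

end


fun pp :: "nat \<Rightarrow> nat \<Rightarrow> real \<Rightarrow> real" where
  "pp q 0 a = 2"
| "pp q (Suc 0) a = a"
| "pp q (Suc (Suc k)) a = a * pp q (Suc k) a - real q * pp q k a"

context rg
begin


lemma lap_Aop: "laplacian adj f x = of_nat (q+1) * f x - Aop f x"
  unfolding laplacian_def Aop_def deg_def degq by simp

lemma eigenspace_iff: "f \<in> eigenspace adj lam \<longleftrightarrow> (\<forall>x. Aop f x = (real (q+1) - lam) * f x)"
  unfolding eigenspace_def lap_Aop by (auto simp: algebra_simps)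

lemma Aop_UNIV: "Aop f x = (\<Sum>y\<in>UNIV. if adj x y then f y else 0)"
  unfolding Aop_def by (simp add: sum.If_cases Int_def)

lemma ip_Aop_sym: "ip f (Aop g) = ip (Aop f) g"
proof -
  have "ip f (Aop g) = (\<Sum>x\<in>UNIV. \<Sum>y\<in>UNIV. if adj x y then f x * g y else 0)"
    unfolding ip_def Aop_UNIV sum_distrib_left by (intro sum.cong refl) simp
  also have "\<dots> = (\<Sum>y\<in>UNIV. \<Sum>x\<in>UNIV. if adj x y then f x * g y else 0)"
    by (rule sum.swap)
  also have "\<dots> = (\<Sum>y\<in>UNIV. \<Sum>x\<in>UNIV. if adj y x then f x * g y else 0)"
    by (intro sum.cong refl) (metis sym)
  also have "\<dots> = ip (Aop f) g"
    unfolding ip_def Aop_UNIV sum_distrib_right by (intro sum.cong refl) simp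
  finally show ?thesis .
qed

lemma ip_sym: "ip f g = ip g f" unfolding ip_def by (simp add: mult.commute)
lemma ip_diff_left: "ip (\<lambda>x. f x - g x) h = ip f h - ip g h"
  unfolding ip_def by (simp add: algebra_simps sum_subtractf)
lemma ip_add_left: "ip (\<lambda>x. f x + g x) h = ip f h + ip g h"
  unfolding ip_def by (simp add: algebra_simps sum.distrib)
lemma ip_scale_left: "ip (\<lambda>x. c * f x) h = c * ip f h"
  unfolding ip_def by (simp add: algebra_simps sum_distrib_left)
lemma ip_sum_left: "ip (\<lambda>x. \<Sum>i\<in>I. f i x) h = (\<Sum>i\<in>I. ip (f i) h)"
  unfolding ip_def by (simp add: sum_distrib_right sum.swap[of _ I])
lemma ip_self_eq0: "ip f f = 0 \<longleftrightarrow> f = (\<lambda>_. 0)"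
proof -
  have "ip f f = (\<Sum>x\<in>UNIV. (f x)\<^sup>2)" unfolding ip_def by (simp add: power2_eq_square)
  then show ?thesis by (simp add: sum_nonneg_eq_0_iff fun_eq_iff)
qed
lemma ip_self_nonneg: "ip f f \<ge> 0"
  unfolding ip_def by (intro sum_nonneg) simp

lemma eig_zero: "(\<lambda>_. 0) \<in> eigenspace adj lam" unfolding eigenspace_iff Aop_def by simp
lemma eig_diff: "f \<in> eigenspace adj lam \<Longrightarrow> g \<in> eigenspace adj lam \<Longrightarrow> (\<lambda>x. f x - g x) \<in> eigenspace adj lam"
  unfolding eigenspace_iff Aop_diff by (simp add: right_diff_distrib)
lemma eig_add: "f \<in> eigenspace adj lam \<Longrightarrow> g \<in> eigenspace adj lam \<Longrightarrow> (\<lambda>x. f x + g x) \<in> eigenspace adj lam"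
  unfolding eigenspace_iff Aop_add by (simp add: distrib_left)
lemma eig_scale: "f \<in> eigenspace adj lam \<Longrightarrow> (\<lambda>x. c * f x) \<in> eigenspace adj lam"
  unfolding eigenspace_iff Aop_scale by (simp add: mult.left_commute)

lemma eig_orth: assumes "f \<in> eigenspace adj lam" "g \<in> eigenspace adj mu" "lam \<noteq> mu"
  shows "ip f g = 0"
proof -
  have "ip f (Aop g) = (\<Sum>x\<in>UNIV. f x * ((real (q+1) - mu) * g x))"
    using assms(2) unfolding eigenspace_iff ip_def by simp
  also have "\<dots> = (real (q+1) - mu) * ip f g" unfolding ip_def
    by (simp add: sum_distrib_left mult.left_commute)
  finally have 1: "ip f (Aop g) = (real (q+1) - mu) * ip f g" .
  have "ip (Aop f) g = (\<Sum>x\<in>UNIV. ((real (q+1) - lam) * f x) * g x)"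
    using assms(1) unfolding eigenspace_iff ip_def by simp
  also have "\<dots> = (real (q+1) - lam) * ip f g" unfolding ip_def
    by (simp add: sum_distrib_left mult.assoc)
  finally have 2: "ip (Aop f) g = (real (q+1) - lam) * ip f g" .
  from 1 2 have e: "(real (q+1) - mu) * ip f g = (real (q+1) - lam) * ip f g" using ip_Aop_sym[of f g] by linarith
  have "(lam - mu) * ip f g = 0" using e by (simp add: algebra_simps)
  then show ?thesis using assms(3) by simp
qed


lemma ip_inner: "ip f g = inner (vec_lambda f :: real^'a) (vec_lambda g)"
  unfolding ip_def inner_vec_def by simp

lemma V_diff: "(vec_lambda (\<lambda>x. f x - g x) :: real^'a) = vec_lambda f - vec_lambda g"
  by (simp add: vec_eq_iff)
lemma V_add: "(vec_lambda (\<lambda>x. f x + g x) :: real^'a) = vec_lambda f + vec_lambda g"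
  by (simp add: vec_eq_iff)
lemma V_scale: "(vec_lambda (\<lambda>x. c * f x) :: real^'a) = c *\<^sub>R vec_lambda f"
  by (simp add: vec_eq_iff)

lemma subspace_eig: "subspace ((vec_lambda :: ('a \<Rightarrow> real) \<Rightarrow> real^'a) ` eigenspace adj lam)"
  unfolding subspace_def
proof (intro conjI ballI allI)
  show "0 \<in> (vec_lambda :: ('a \<Rightarrow> real) \<Rightarrow> real^'a) ` eigenspace adj lam"
  proof (rule image_eqI[where x="\<lambda>_. 0"])
    show "(0::real^'a) = vec_lambda (\<lambda>_. 0)" by (simp add: vec_eq_iff)
  qed (rule eig_zero)
next
  fix x y :: "real^'a" assume "x \<in> vec_lambda ` eigenspace adj lam" "y \<in> vec_lambda ` eigenspace adj lam"
  then obtain f g where "f \<in> eigenspace adj lam" "g \<in> eigenspace adj lam" "x = vec_lambda f" "y = vec_lambda g" by auto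
  then show "x + y \<in> vec_lambda ` eigenspace adj lam"
    by (intro image_eqI[where x="\<lambda>x. f x + g x"]) (simp_all add: V_add eig_add)
next
  fix c :: real and x :: "real^'a" assume "x \<in> vec_lambda ` eigenspace adj lam"
  then obtain f where "f \<in> eigenspace adj lam" "x = vec_lambda f" by auto
  then show "c *\<^sub>R x \<in> vec_lambda ` eigenspace adj lam"
    by (intro image_eqI[where x="\<lambda>x. c * f x"]) (simp_all add: V_scale eig_scale)
qed

lemma proj_ex1: "\<exists>!g. g \<in> eigenspace adj lam \<and> (\<forall>h \<in> eigenspace adj lam. ip (\<lambda>x. v x - g x) h = 0)"
proof -
  let ?S = "(vec_lambda :: ('a \<Rightarrow> real) \<Rightarrow> real^'a) ` eigenspace adj lam"
  have sp: "span ?S = ?S" using subspace_eig span_eq_iff by blast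
  obtain y z where y: "y \<in> span ?S" and z: "\<And>w. w \<in> span ?S \<Longrightarrow> orthogonal z w"
    and vyz: "vec_lambda v = y + z"
    using orthogonal_subspace_decomp_exists[of ?S "vec_lambda v"] by blast
  from y sp obtain g where g: "g \<in> eigenspace adj lam" "y = vec_lambda g" by auto
  have orth: "\<forall>h \<in> eigenspace adj lam. ip (\<lambda>x. v x - g x) h = 0"
  proof
    fix h assume h: "h \<in> eigenspace adj lam"
    have "ip (\<lambda>x. v x - g x) h = inner z (vec_lambda h)"
      unfolding ip_inner V_diff using vyz g by simp
    also have "\<dots> = 0" using z[of "vec_lambda h"] h sp unfolding orthogonal_def by auto
    finally show "ip (\<lambda>x. v x - g x) h = 0" .
  qed
  show ?thesis
  proof (rule ex1I[of _ g])
    show "g \<in> eigenspace adj lam \<and> (\<forall>h \<in> eigenspace adj lam. ip (\<lambda>x. v x - g x) h = 0)"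
      using g orth by blast
  next
    fix g' assume g': "g' \<in> eigenspace adj lam \<and> (\<forall>h \<in> eigenspace adj lam. ip (\<lambda>x. v x - g' x) h = 0)"
    let ?d = "\<lambda>x. g x - g' x"
    have d: "?d \<in> eigenspace adj lam" using eig_diff g g' by blast
    have "ip ?d ?d = ip (\<lambda>x. v x - g' x) ?d - ip (\<lambda>x. v x - g x) ?d"
      unfolding ip_diff_left[symmetric] by (simp add: algebra_simps)
    also have "\<dots> = 0" using g' orth d by simp
    finally have "?d = (\<lambda>_. 0)" using ip_self_eq0 by blast
    then show "g' = g" by (simp add: fun_eq_iff)
  qed
qed

lemma proj_both: "eig_proj adj lam v \<in> eigenspace adj lam \<and>
   (\<forall>h \<in> eigenspace adj lam. ip (\<lambda>x. v x - eig_proj adj lam v x) h = 0)"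
  unfolding eig_proj_def by (rule theI'[OF proj_ex1])

lemma proj_in: "eig_proj adj lam v \<in> eigenspace adj lam"
  using proj_both by (rule conjunct1)

lemma proj_orth: "h \<in> eigenspace adj lam \<Longrightarrow> ip (\<lambda>x. v x - eig_proj adj lam v x) h = 0"
  using proj_both[of lam v] by simp

lemma proj_unique: "g \<in> eigenspace adj lam \<Longrightarrow> (\<forall>h\<in>eigenspace adj lam. ip (\<lambda>x. v x - g x) h = 0)
   \<Longrightarrow> eig_proj adj lam v = g"
  unfolding eig_proj_def by (rule the1_equality[OF proj_ex1]) blast


lemma vl_inv[simp]: "($) (vec_lambda f :: real^'a) = f" by (simp add: fun_eq_iff)

definition Av :: "real^'a \<Rightarrow> real^'a" where "Av v = vec_lambda (Aop (($) v))"

lemma nth_add_fun: "(($) (x + y)) = (\<lambda>i. x$i + y$i)" by (simp add: fun_eq_iff)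
lemma nth_scale_fun: "(($) (c *\<^sub>R x)) = (\<lambda>i. c * x$i)" by (simp add: fun_eq_iff)

lemma linear_Av: "linear Av"
proof (rule linearI)
  fix x y :: "real^'a"
  show "Av (x + y) = Av x + Av y" unfolding Av_def nth_add_fun by (simp add: vec_eq_iff Aop_add)
next
  fix c :: real and x :: "real^'a"
  show "Av (c *\<^sub>R x) = c *\<^sub>R Av x" unfolding Av_def nth_scale_fun by (simp add: vec_eq_iff Aop_scale)
qed

lemma inner_ip: "inner (x::real^'a) y = ip (($) x) (($) y)"
  unfolding ip_def inner_vec_def by simp

lemma Av_sym: "inner (Av x) y = inner x (Av y)"
  unfolding inner_ip Av_def using ip_Aop_sym by simp

lemma quad_zero:
  fixes c d :: real
  assumes d: "d \<ge> 0" and H: "\<And>t. 0 \<le> 2*t*c + t^2*d"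
  shows "c = 0"
proof (rule ccontr)
  assume c: "c \<noteq> 0"
  define t where "t = - c / (d + 1)"
  have td: "t * (d+1) = - c" unfolding t_def using d by simp
  have "(d+1)^2 * (2*t*c + t^2*d) = 2*c*(t*(d+1))*(d+1) + (t*(d+1))^2*d"
    by (simp add: algebra_simps power2_eq_square)
  also have "\<dots> = - (c^2 * (d + 2))" unfolding td by (simp add: algebra_simps power2_eq_square)
  also have "\<dots> < 0" using c d by (simp add: mult_pos_pos)
  finally have "(d+1)^2 * (2*t*c + t^2*d) < 0" .
  moreover have "(d+1)^2 > 0" using d by simp
  ultimately have "2*t*c + t^2*d < 0" by (simp add: mult_less_0_iff)
  then show False using H[of t] by simp
qed

lemma orth_all_zero:
  assumes H: "\<forall>lam. \<forall>h\<in>eigenspace adj lam. ip r h = 0"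
  shows "r = (\<lambda>_. 0)"
proof (rule ccontr)
  assume r0: "r \<noteq> (\<lambda>_. 0)"
  define W where "W = {w::real^'a. \<forall>lam. \<forall>h\<in>eigenspace adj lam. inner w (vec_lambda h) = 0}"
  have subW: "subspace W" unfolding subspace_def W_def
    by (auto simp: inner_add_left)
  have invW: "Av w \<in> W" if "w \<in> W" for w
    unfolding W_def
  proof (intro CollectI allI ballI)
    fix lam h assume h: "h \<in> eigenspace adj lam"
    have "Av (vec_lambda h) = (real (q+1) - lam) *\<^sub>R vec_lambda h"
      using h unfolding eigenspace_iff Av_def by (simp add: vec_eq_iff)
    then have "inner (Av w) (vec_lambda h) = (real (q+1) - lam) * inner w (vec_lambda h)"
      by (simp add: Av_sym)
    also have "\<dots> = 0" using that h unfolding W_def by simp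
    finally show "inner (Av w) (vec_lambda h) = 0" .
  qed
  have rW: "vec_lambda r \<in> W" using H unfolding W_def by (simp add: ip_inner)
  have rn0: "vec_lambda r \<noteq> (0::real^'a)" using r0 by (simp add: vec_eq_iff fun_eq_iff)
  define S where "S = W \<inter> sphere 0 1"
  have cS: "compact S" unfolding S_def by (intro closed_Int_compact closed_subspace subW compact_sphere)
  have neS: "S \<noteq> {}"
  proof -
    have "(1 / norm (vec_lambda r :: real^'a)) *\<^sub>R vec_lambda r \<in> S"
      unfolding S_def using rW rn0 subW by (auto simp: subspace_scale)
    then show ?thesis by blast
  qed
  have cont: "continuous_on S (\<lambda>x. inner (Av x) x)"
    by (intro continuous_intros linear_continuous_on_compose[OF continuous_on_id linear_Av])
  obtain xs where xs: "xs \<in> S" and xmax: "\<And>y. y \<in> S \<Longrightarrow> inner (Av y) y \<le> inner (Av xs) xs"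
    using continuous_attains_sup[OF cS neS cont] by blast
  define M where "M = inner (Av xs) xs"
  have xsW: "xs \<in> W" and nxs: "norm xs = 1" using xs unfolding S_def by auto
  have ixs: "inner xs xs = 1" using nxs by (simp add: power2_norm_eq_inner[symmetric])
  have Q: "inner (Av y) y \<le> M * inner y y" if yW: "y \<in> W" for y
  proof (cases "y = 0")
    case True then show ?thesis by (simp add: linear_0[OF linear_Av])
  next
    case False
    define n where "n = norm y"
    have n0: "n > 0" using False unfolding n_def by simp
    have "(1/n) *\<^sub>R y \<in> S" unfolding S_def n_def using yW subW False by (auto simp: subspace_scale)
    then have "inner (Av ((1/n) *\<^sub>R y)) ((1/n) *\<^sub>R y) \<le> M" using xmax unfolding M_def by blast
    then have "(1/n)^2 * inner (Av y) y \<le> M"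
      by (simp add: linear_cmul[OF linear_Av] power2_eq_square)
    then have "inner (Av y) y \<le> M * n^2" using n0 by (simp add: field_simps)
    also have "n^2 = inner y y" unfolding n_def by (simp add: power2_norm_eq_inner)
    finally show ?thesis .
  qed
  define b where "b = M *\<^sub>R xs - Av xs"
  have bW: "b \<in> W" unfolding b_def using xsW invW subW by (simp add: subspace_diff subspace_scale)
  have c0: "inner b y = 0" if yW: "y \<in> W" for y
  proof (rule quad_zero)
    show "0 \<le> M * inner y y - inner (Av y) y" using Q[OF yW] by simp
  next
    fix t :: real
    have zW: "xs + t *\<^sub>R y \<in> W" using xsW yW subW by (simp add: subspace_add subspace_scale)
    have Qz: "inner (Av (xs + t *\<^sub>R y)) (xs + t *\<^sub>R y) \<le> M * inner (xs + t *\<^sub>R y) (xs + t *\<^sub>R y)"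
      by (rule Q[OF zW])
    have e1: "inner (Av (xs + t *\<^sub>R y)) (xs + t *\<^sub>R y) =
        M + 2 * t * inner (Av xs) y + t^2 * inner (Av y) y"
    proof -
      have "Av (xs + t *\<^sub>R y) = Av xs + t *\<^sub>R Av y"
        by (simp add: linear_add[OF linear_Av] linear_cmul[OF linear_Av])
      moreover have "inner (Av y) xs = inner (Av xs) y" by (metis Av_sym inner_commute)
      ultimately show ?thesis unfolding M_def
        by (simp add: inner_add_left inner_add_right power2_eq_square algebra_simps)
    qed
    have e2: "inner (xs + t *\<^sub>R y) (xs + t *\<^sub>R y) = 1 + 2 * t * inner xs y + t^2 * inner y y"
      using ixs by (simp add: inner_add_left inner_add_right power2_eq_square algebra_simps inner_commute)
    have e3: "inner b y = M * inner xs y - inner (Av xs) y"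
      unfolding b_def by (simp add: inner_diff_left)
    have i1: "M + 2 * t * inner (Av xs) y + t^2 * inner (Av y) y \<le> M * (1 + 2 * t * inner xs y + t^2 * inner y y)"
      using Qz unfolding e1 e2 .
    have e4: "2 * t * (M * inner xs y - inner (Av xs) y) + t^2 * (M * inner y y - inner (Av y) y)
      = M * (1 + 2 * t * inner xs y + t^2 * inner y y) - (M + 2 * t * inner (Av xs) y + t^2 * inner (Av y) y)"
      by (simp add: algebra_simps)
    show "0 \<le> 2 * t * inner b y + t^2 * (M * inner y y - inner (Av y) y)"
      unfolding e3 e4 using i1 by linarith
  qed
  have "inner b b = 0" using c0[OF bW] .
  then have "b = 0" by simp
  then have eqv: "Av xs = M *\<^sub>R xs" unfolding b_def by simp
  have "(($) xs) \<in> eigenspace adj (real (q+1) - M)"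
    unfolding eigenspace_iff
  proof
    fix x
    have "Av xs $ x = M * xs $ x" using eqv by simp
    then show "Aop (($) xs) x = (real (q + 1) - (real (q + 1) - M)) * xs $ x"
      unfolding Av_def by simp
  qed
  then have "inner xs (vec_lambda (($) xs)) = 0" using xsW unfolding W_def by blast
  then have "inner xs xs = 0" by (simp add: vec_nth_inverse)
  then show False using ixs by simp
qed


definition Eig :: "real set" where "Eig = {lam. is_eigenvalue adj lam}"

lemma not_eig_zero: "lam \<notin> Eig \<Longrightarrow> h \<in> eigenspace adj lam \<Longrightarrow> h = (\<lambda>_. 0)"
  unfolding Eig_def is_eigenvalue_def by blast

lemma finite_Eig: "finite Eig"
proof -
  define ev where "ev lam = (SOME f. f \<in> eigenspace adj lam \<and> f \<noteq> (\<lambda>_. 0))" for lam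
  have ev: "ev lam \<in> eigenspace adj lam \<and> ev lam \<noteq> (\<lambda>_. 0)" if "lam \<in> Eig" for lam
  proof -
    have "\<exists>f. f \<in> eigenspace adj lam \<and> f \<noteq> (\<lambda>_. 0)" using that unfolding Eig_def is_eigenvalue_def by blast
    then show ?thesis unfolding ev_def by (rule someI_ex)
  qed
  let ?g = "\<lambda>lam. (vec_lambda (ev lam) :: real^'a)"
  have inj: "inj_on ?g Eig"
  proof (rule inj_onI)
    fix lam mu assume l: "lam \<in> Eig" and m: "mu \<in> Eig" and e: "?g lam = ?g mu"
    show "lam = mu"
    proof (rule ccontr)
      assume "lam \<noteq> mu"
      then have "ip (ev lam) (ev mu) = 0" using ev[OF l] ev[OF m] eig_orth by blast
      moreover have "ev lam = ev mu"
      proof -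
        have "($) (?g lam) = ($) (?g mu)" using e by simp
        then show ?thesis by simp
      qed
      ultimately have "ev lam = (\<lambda>_. 0)" using ip_self_eq0[of "ev lam"] by simp
      then show False using ev[OF l] by simp
    qed
  qed
  have "pairwise orthogonal (?g ` Eig)"
    unfolding pairwise_def
  proof (intro ballI impI)
    fix a b assume a: "a \<in> ?g ` Eig" and b: "b \<in> ?g ` Eig" and ab: "a \<noteq> b"
    then obtain lam mu where l: "lam \<in> Eig" "a = ?g lam" and m: "mu \<in> Eig" "b = ?g mu" by blast
    then have "lam \<noteq> mu" using ab by blast
    then have "ip (ev lam) (ev mu) = 0" using ev[OF l(1)] ev[OF m(1)] eig_orth by blast
    then show "orthogonal a b" unfolding orthogonal_def l m ip_inner .
  qed
  moreover have "0 \<notin> ?g ` Eig"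
  proof
    assume "0 \<in> ?g ` Eig"
    then obtain lam where "lam \<in> Eig" "?g lam = 0" by auto
    then have "($) (?g lam) = ($) (0::real^'a)" by simp
    then have "ev lam = (\<lambda>_. 0)" by (simp add: fun_eq_iff)
    then show False using ev \<open>lam \<in> Eig\<close> by blast
  qed
  ultimately have "independent (?g ` Eig)" by (rule pairwise_orthogonal_independent)
  then have "finite (?g ` Eig)" using independent_bound by blast
  then show ?thesis using inj finite_imageD by blast
qed

lemma Eig_bound: assumes "lam \<in> Eig" shows "\<bar>real (q+1) - lam\<bar> \<le> real (q+1)"
proof -
  obtain f where f: "f \<in> eigenspace adj lam" "f \<noteq> (\<lambda>_. 0)"
    using assms unfolding Eig_def is_eigenvalue_def by blast
  define m where "m = Max (range (\<lambda>y. \<bar>f y\<bar>))"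
  have "m \<in> range (\<lambda>y. \<bar>f y\<bar>)" unfolding m_def by (rule Max_in) auto
  then obtain x where x: "\<bar>f x\<bar> = m" by auto
  have le: "\<bar>f y\<bar> \<le> \<bar>f x\<bar>" for y unfolding x m_def by (rule Max_ge) auto
  have pos: "\<bar>f x\<bar> > 0"
  proof (rule ccontr)
    assume "\<not> \<bar>f x\<bar> > 0"
    then have "\<forall>y. f y = 0" using le by (metis abs_ge_zero abs_le_zero_iff order_trans not_less)
    then show False using f(2) by auto
  qed
  have "\<bar>real (q+1) - lam\<bar> * \<bar>f x\<bar> = \<bar>Aop f x\<bar>"
    using f(1) unfolding eigenspace_iff by (simp add: abs_mult)
  also have "\<dots> \<le> (\<Sum>y\<in>{y. adj x y}. \<bar>f y\<bar>)" unfolding Aop_def by (rule sum_abs)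
  also have "\<dots> \<le> (\<Sum>y\<in>{y. adj x y}. \<bar>f x\<bar>)" by (intro sum_mono le)
  also have "\<dots> = real (q+1) * \<bar>f x\<bar>" using degq by simp
  finally show ?thesis using pos by simp
qed

lemma Aop_sum: "Aop (\<lambda>x. \<Sum>i\<in>I. f i x) y = (\<Sum>i\<in>I. Aop (f i) y)"
  unfolding Aop_def by (rule sum.swap)

lemma Aop_proj: "Aop (eig_proj adj lam v) y = (real (q+1) - lam) * eig_proj adj lam v y"
  using proj_in[of lam v] unfolding eigenspace_iff by blast

end

context rgx
begin

definition deltaf :: "'a \<Rightarrow> real" where "deltaf x = (if x = x0 then 1 else 0)"

lemma complete: "(\<lambda>x. \<Sum>lam\<in>Eig. eig_proj adj lam deltaf x) = deltaf"
proof -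
  define r where "r = (\<lambda>x. deltaf x - (\<Sum>lam\<in>Eig. eig_proj adj lam deltaf x))"
  have "\<forall>mu. \<forall>h\<in>eigenspace adj mu. ip r h = 0"
  proof (intro allI ballI)
    fix mu h assume h: "h \<in> eigenspace adj mu"
    show "ip r h = 0"
    proof (cases "mu \<in> Eig")
      case True
      have "ip r h = ip deltaf h - (\<Sum>lam\<in>Eig. ip (eig_proj adj lam deltaf) h)"
        unfolding r_def ip_diff_left ip_sum_left ..
      also have "(\<Sum>lam\<in>Eig. ip (eig_proj adj lam deltaf) h) = ip (eig_proj adj mu deltaf) h"
      proof -
        have "(\<Sum>lam\<in>Eig. ip (eig_proj adj lam deltaf) h) = ip (eig_proj adj mu deltaf) h
            + (\<Sum>lam\<in>Eig - {mu}. ip (eig_proj adj lam deltaf) h)"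
          using True finite_Eig by (simp add: sum.remove)
        also have "(\<Sum>lam\<in>Eig - {mu}. ip (eig_proj adj lam deltaf) h) = 0"
          using h proj_in eig_orth by (intro sum.neutral) blast
        finally show ?thesis by simp
      qed
      also have "ip deltaf h - ip (eig_proj adj mu deltaf) h = 0"
        using proj_orth[OF h, of deltaf] unfolding ip_diff_left by simp
      finally show ?thesis .
    next
      case False
      then have "h = (\<lambda>_. 0)" using not_eig_zero h by blast
      then show ?thesis unfolding ip_def by simp
    qed
  qed
  then have "r = (\<lambda>_. 0)" by (rule orth_all_zero)
  then show ?thesis unfolding r_def by (simp add: fun_eq_iff)
qed

definition hseq :: "nat \<Rightarrow> 'a \<Rightarrow> real" where
  "hseq m x = (\<Sum>lam\<in>Eig. pp q m (real (q+1) - lam) * eig_proj adj lam deltaf x)"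

lemma Aop_of_int: "Aop (\<lambda>x. real_of_int (f x)) y = real_of_int (Aop f y)"
  unfolding Aop_def by simp

lemma gv_hseq: "real_of_int (gv m y) = hseq m y"
proof (induction m y rule: gv.induct)
  case (1 y)
  have "real_of_int (gv 0 y) = 2 * deltaf y" by (simp add: uu_def deltaf_def)
  also have "\<dots> = 2 * (\<Sum>lam\<in>Eig. eig_proj adj lam deltaf y)" using fun_cong[OF complete, of y] by simp
  also have "\<dots> = hseq 0 y" unfolding hseq_def by (simp add: sum_distrib_left)
  finally show ?case .
next
  case (2 y)
  have d: "(\<lambda>x. real_of_int (uu 0 x)) = deltaf" by (simp add: fun_eq_iff uu_def deltaf_def)
  have "real_of_int (gv (Suc 0) y) = Aop deltaf y"
    using Aop_of_int[of "uu 0" y] d by simp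
  also have "\<dots> = Aop (\<lambda>x. \<Sum>lam\<in>Eig. eig_proj adj lam deltaf x) y" using complete by simp
  also have "\<dots> = hseq (Suc 0) y" unfolding Aop_sum hseq_def Aop_proj by simp
  finally show ?case .
next
  case (3 k y)
  have a: "(\<lambda>x. real_of_int (gv (Suc k) x)) = hseq (Suc k)" using 3(1) by (simp add: fun_eq_iff)
  have "real_of_int (gv (Suc (Suc k)) y) = Aop (hseq (Suc k)) y - real q * hseq k y"
    using 3(2) Aop_of_int[of "gv (Suc k)" y] a by simp
  also have "Aop (hseq (Suc k)) y = (\<Sum>lam\<in>Eig. pp q (Suc k) (real (q+1) - lam) * ((real (q+1) - lam) * eig_proj adj lam deltaf y))"
    unfolding hseq_def[abs_def] Aop_sum Aop_scale Aop_proj ..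
  also have "real q * hseq k y = (\<Sum>lam\<in>Eig. real q * (pp q k (real (q+1) - lam) * eig_proj adj lam deltaf y))"
    unfolding hseq_def by (rule sum_distrib_left)
  also have "(\<Sum>lam\<in>Eig. pp q (Suc k) (real (q+1) - lam) * ((real (q+1) - lam) * eig_proj adj lam deltaf y))
      - (\<Sum>lam\<in>Eig. real q * (pp q k (real (q+1) - lam) * eig_proj adj lam deltaf y))
      = (\<Sum>lam\<in>Eig. pp q (Suc (Suc k)) (real (q+1) - lam) * eig_proj adj lam deltaf y)"
    unfolding sum_subtractf[symmetric] by (intro sum.cong refl) (simp add: algebra_simps)
  finally show ?case unfolding hseq_def .
qed

lemma local_mult_nonneg: "local_mult adj x0 lam \<ge> 0"
proof -
  let ?P = "eig_proj adj lam deltaf"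
  have "ip deltaf ?P = (\<Sum>x\<in>UNIV. if x = x0 then ?P x else 0)"
    unfolding ip_def deltaf_def by (intro sum.cong) auto
  also have "\<dots> = ?P x0" by simp
  finally have "local_mult adj x0 lam = ip deltaf ?P"
    unfolding local_mult_def deltaf_def[abs_def] by simp
  also have "\<dots> = ip (\<lambda>x. deltaf x - ?P x) ?P + ip ?P ?P"
    unfolding ip_diff_left by simp
  also have "ip (\<lambda>x. deltaf x - ?P x) ?P = 0" using proj_orth proj_in by blast
  finally show ?thesis using ip_self_nonneg by simp
qed

theorem spec_sum: "real_of_int (gv m x0) =
  (\<Sum>lam\<in>local_spectrum adj x0. local_mult adj x0 lam * pp q m (real (q+1) - lam))"
proof -
  have "real_of_int (gv m x0) = (\<Sum>lam\<in>Eig. local_mult adj x0 lam * pp q m (real (q+1) - lam))"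
    unfolding gv_hseq hseq_def local_mult_def deltaf_def[symmetric] by (simp add: mult.commute)
  also have "\<dots> = (\<Sum>lam\<in>local_spectrum adj x0. local_mult adj x0 lam * pp q m (real (q+1) - lam))"
  proof (rule sum.mono_neutral_right[OF finite_Eig])
    show "local_spectrum adj x0 \<subseteq> Eig" unfolding local_spectrum_def Eig_def by auto
    show "\<forall>i\<in>Eig - local_spectrum adj x0. local_mult adj x0 i * pp q m (real (q + 1) - i) = 0"
    proof
      fix i assume "i \<in> Eig - local_spectrum adj x0"
      then have "\<not> local_mult adj x0 i > 0" unfolding local_spectrum_def Eig_def by auto
      then have "local_mult adj x0 i = 0" using local_mult_nonneg[of i] by simp
      then show "local_mult adj x0 i * pp q m (real (q + 1) - i) = 0" by simp
    qed
  qed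
  finally show ?thesis .
qed

lemma LS_finite: "finite (local_spectrum adj x0)"
  using finite_Eig unfolding local_spectrum_def Eig_def by (auto intro: finite_subset)

lemma LS_bound: "lam \<in> local_spectrum adj x0 \<Longrightarrow> \<bar>real (q+1) - lam\<bar> \<le> real (q+1)"
  using Eig_bound unfolding local_spectrum_def Eig_def by auto

end


lemma log_series: assumes "norm z < 1"
  shows "(\<lambda>n. z ^ Suc n / of_nat (Suc n)) sums (- Ln (1 - z))"
proof -
  have "(\<lambda>n. - ((- (-z)) ^ n) / of_nat n) sums Ln (1 + - z)"
    using Ln_series'[of "-z"] assms by simp
  then have "(\<lambda>n. - (z ^ n) / of_nat n) sums Ln (1 - z)" by simp
  then have "(\<lambda>n. - (z ^ Suc n) / of_nat (Suc n)) sums Ln (1 - z)"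
    by (subst sums_Suc_iff) simp
  from sums_minus[OF this] show ?thesis by simp
qed

lemma log1m_Ln: assumes "norm z < 1" shows "log1m z = Ln (1 - z)"
proof -
  have "(\<Sum>n. z ^ Suc n / of_nat (Suc n)) = - Ln (1 - z)"
    using log_series[OF assms] by (rule sums_unique[symmetric])
  then show ?thesis unfolding log1m_def by simp
qed

lemma alpha_sq:
  fixes Q :: real assumes Q: "Q > 0" and al: "al = (Q + sqrt (Q^2 + 4*Q)) / 2"
  shows "al * al = Q * al + Q" and "al > Q"
proof -
  define s where "s = sqrt (Q^2 + 4*Q)"
  have "0 \<le> Q^2 + 4*Q" using Q by simp
  then have s2: "s * s = Q^2 + 4*Q" unfolding s_def real_sqrt_mult_self by simp
  have "al * al = (Q * Q + 2 * Q * s + s * s) / 4" unfolding al s_def[symmetric] by (simp add: field_simps)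
  also have "\<dots> = Q * al + Q" unfolding al s_def[symmetric] using s2 by (simp add: field_simps power2_eq_square)
  finally show "al * al = Q * al + Q" .
  have "Q^2 < Q^2 + 4*Q" using Q by simp
  then have "Q < s" unfolding s_def using Q by (metis real_less_rsqrt abs_of_pos real_sqrt_abs)
  then show "al > Q" unfolding al s_def[symmetric] by simp
qed

lemma root_bound:
  fixes r :: complex and a Q qq :: real
  assumes Q: "Q > 0" and al: "al = (Q + sqrt (Q^2 + 4*Q)) / 2"
    and a: "\<bar>a\<bar> \<le> Q" and qq: "0 \<le> qq" "qq < Q"
    and eq: "r^2 - of_real a * r + of_real qq = 0"
  shows "norm r < al"
proof (rule ccontr)
  assume "\<not> norm r < al"
  then have t: "norm r \<ge> al" by simp
  define t where "t = norm r"
  define s where "s = sqrt (Q^2 + 4*Q)"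
  have "0 \<le> Q^2" by simp
  moreover have "0 \<le> 4*Q" using Q by simp
  ultimately have nn: "0 \<le> Q^2 + 4*Q" by linarith
  have s2: "s * s = Q^2 + 4*Q" unfolding s_def using nn by (metis abs_of_nonneg real_sqrt_mult_self)
  have s0: "s \<ge> 0" unfolding s_def using nn by simp
  have "t^2 = norm (r^2)" unfolding t_def by (simp add: norm_power)
  also have "r^2 = of_real a * r - of_real qq" using eq by (simp add: algebra_simps)
  also have "norm (of_real a * r - of_real qq :: complex) \<le> \<bar>a\<bar> * t + qq"
  proof -
    have "norm (of_real a * r - of_real qq :: complex) \<le> norm (of_real a * r :: complex) + norm (of_real qq :: complex)"
      by (rule norm_triangle_ineq4)
    also have "\<dots> = \<bar>a\<bar> * t + qq" unfolding t_def using qq by (simp add: norm_mult)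
    finally show ?thesis .
  qed
  finally have "t^2 \<le> \<bar>a\<bar> * t + qq" .
  moreover have "\<bar>a\<bar> * t \<le> Q * t" using a unfolding t_def by (simp add: mult_right_mono)
  ultimately have lt: "t^2 < Q * t + Q" using qq by linarith
  have fac0: "(t - (Q + s)/2) * (t - (Q - s)/2) = t*t - Q*t + (Q * Q - s * s) / 4"
    by (simp add: algebra_simps diff_divide_distrib add_divide_distrib)
  have fac: "t^2 - Q*t - Q = (t - (Q + s)/2) * (t - (Q - s)/2)"
    unfolding fac0 s2 by (simp add: power2_eq_square)
  have f1: "t - (Q + s)/2 \<ge> 0" using t unfolding t_def al s_def by simp
  have "Q * Q \<le> s * s" unfolding s2 using Q by (simp add: power2_eq_square)
  then have "Q \<le> s" using s0 by (rule_tac power2_le_imp_le) (simp_all add: power2_eq_square)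
  then have h1: "(Q - s)/2 \<le> 0" by simp
  have h2: "0 \<le> t" unfolding t_def by simp
  have f2: "t - (Q - s)/2 \<ge> 0" using h1 h2 by linarith
  have "t^2 - Q*t - Q \<ge> 0" unfolding fac using f1 f2 by (rule mult_nonneg_nonneg)
  then show False using lt by simp
qed

lemma pp_roots:
  fixes r1 r2 :: complex
  assumes "r1 + r2 = of_real a" "r1 * r2 = of_nat q"
  shows "r1 ^ m + r2 ^ m = of_real (pp q m a)"
proof (induction m rule: less_induct)
  case (less m)
  consider "m = 0" | "m = 1" | k where "m = Suc (Suc k)" by (metis One_nat_def not0_implies_Suc)
  then show ?case
  proof cases
    case 1 then show ?thesis by simp
  next
    case 2 then show ?thesis using assms by simp
  next
    case 3
    have "r1 ^ m + r2 ^ m = (r1 + r2) * (r1 ^ Suc k + r2 ^ Suc k) - (r1 * r2) * (r1 ^ k + r2 ^ k)"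
      unfolding 3 by (simp add: algebra_simps)
    also have "\<dots> = of_real a * of_real (pp q (Suc k) a) - of_nat q * of_real (pp q k a)"
    proof -
      have i1: "r1 ^ Suc k + r2 ^ Suc k = of_real (pp q (Suc k) a)" using less.IH[of "Suc k"] 3 by simp
      have i0: "r1 ^ k + r2 ^ k = of_real (pp q k a)" using less.IH[of k] 3 by simp
      show ?thesis by (simp only: assms i1 i0)
    qed
    also have "\<dots> = of_real (pp q m a)" unfolding 3 by simp
    finally show ?thesis .
  qed
qed


lemma Re_pos_small: "norm (z::complex) < 1 \<Longrightarrow> Re (1 - z) > 0"
  using abs_Re_le_cmod[of z] by simp

lemma quad_log:
  fixes u :: complex and a :: real and q :: nat
  assumes al: "al = (real (q+1) + sqrt (real (q+1)^2 + 4 * real (q+1))) / 2"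
    and a: "\<bar>a\<bar> \<le> real (q+1)" and u: "norm u < 1 / al"
  shows "(\<lambda>n. of_real (pp q (Suc n) a) / of_nat (Suc n) * u ^ Suc n) sums (- log1m (of_real a * u - of_nat q * u^2))"
proof -
  define Q where "Q = real (q+1)"
  have Q0: "Q > 0" unfolding Q_def by simp
  have al': "al = (Q + sqrt (Q^2 + 4*Q)) / 2" unfolding Q_def al ..
  have alsq: "al * al = Q * al + Q" and alQ: "al > Q" using alpha_sq[OF Q0 al'] by auto
  have al0: "al > 0" using alQ Q0 by simp
  define d where "d = csqrt (of_real a ^ 2 - 4 * of_nat q)"
  define r1 where "r1 = (of_real a + d) / 2"
  define r2 where "r2 = (of_real a - d) / 2"
  have sum12: "r1 + r2 = of_real a" unfolding r1_def r2_def by (simp add: field_simps)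
  have prod12: "r1 * r2 = of_nat q"
  proof -
    have "r1 * r2 = (of_real a ^ 2 - d^2) / 4" unfolding r1_def r2_def by (simp add: field_simps power2_eq_square)
    also have "d^2 = of_real a ^ 2 - 4 * of_nat q" unfolding d_def by (rule power2_csqrt)
    finally show ?thesis by simp
  qed
  have rb: "norm r < al" if "r = r1 \<or> r = r2" for r
  proof (rule root_bound[OF Q0 al'])
    show "\<bar>a\<bar> \<le> Q" using a unfolding Q_def .
    show "0 \<le> real q" by simp
    show "real q < Q" unfolding Q_def by simp
    have "r^2 - (r1 + r2) * r + r1 * r2 = 0" using that by (auto simp: algebra_simps power2_eq_square)
    then show "r^2 - of_real a * r + of_real (real q) = 0" unfolding sum12 prod12 by simp
  qed
  have small: "norm (r * u) < 1" if "r = r1 \<or> r = r2" for r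
  proof -
    have "norm (r * u) = norm r * norm u" by (simp add: norm_mult)
    also have "\<dots> < al * (1 / al)"
      using rb[OF that] u by (intro mult_strict_mono') auto
    also have "\<dots> = 1" using al0 by simp
    finally show ?thesis .
  qed
  have s1: "(\<lambda>n. (r1 * u) ^ Suc n / of_nat (Suc n)) sums (- Ln (1 - r1 * u))"
    by (rule log_series) (rule small, simp)
  have s2: "(\<lambda>n. (r2 * u) ^ Suc n / of_nat (Suc n)) sums (- Ln (1 - r2 * u))"
    by (rule log_series) (rule small, simp)
  have s12: "(\<lambda>n. (r1 * u) ^ Suc n / of_nat (Suc n) + (r2 * u) ^ Suc n / of_nat (Suc n)) sums
     (- Ln (1 - r1 * u) + - Ln (1 - r2 * u))"
    by (rule sums_add[OF s1 s2])
  have termeq: "(r1 * u) ^ Suc n / of_nat (Suc n) + (r2 * u) ^ Suc n / of_nat (Suc n) =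
      of_real (pp q (Suc n) a) / of_nat (Suc n) * u ^ Suc n" for n
  proof -
    have "(r1 * u) ^ Suc n / of_nat (Suc n) + (r2 * u) ^ Suc n / of_nat (Suc n) =
       (r1 ^ Suc n + r2 ^ Suc n) / of_nat (Suc n) * u ^ Suc n"
      by (simp add: power_mult_distrib add_divide_distrib algebra_simps)
    also have "r1 ^ Suc n + r2 ^ Suc n = of_real (pp q (Suc n) a)" using pp_roots[OF sum12 prod12] .
    finally show ?thesis .
  qed
  have w: "norm (of_real a * u - of_nat q * u^2) < 1"
  proof -
    have "norm (of_real a * u - of_nat q * u^2) \<le> norm (of_real a * u) + norm (of_nat q * u^2)"
      by (rule norm_triangle_ineq4)
    also have "\<dots> = \<bar>a\<bar> * norm u + real q * norm u ^ 2" by (simp add: norm_mult norm_power)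
    also have "\<dots> \<le> Q * norm u + Q * norm u ^ 2"
      using a unfolding Q_def by (intro add_mono mult_right_mono) auto
    also have "\<dots> < Q * (1/al) + Q * (1/al)^2"
    proof (rule add_less_le_mono)
      show "Q * norm u < Q * (1/al)" using Q0 u by (rule mult_strict_left_mono[rotated])
      have "norm u ^ 2 \<le> (1/al)^2" using u by (intro power_mono) auto
      then show "Q * norm u ^ 2 \<le> Q * (1/al)^2" using Q0 by simp
    qed
    also have "\<dots> = (Q * al + Q) / (al * al)" using al0 by (simp add: field_simps power2_eq_square)
    also have "\<dots> = 1" unfolding alsq[symmetric] using al0 by simp
    finally show ?thesis .
  qed
  have fac: "1 - (of_real a * u - of_nat q * u^2) = (1 - r1 * u) * (1 - r2 * u)"
  proof -
    have "(1 - r1 * u) * (1 - r2 * u) = 1 - (r1 + r2) * u + (r1 * r2) * u^2"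
      by (simp add: algebra_simps power2_eq_square)
    then show ?thesis unfolding sum12 prod12 by simp
  qed
  have nz1: "1 - r1 * u \<noteq> 0" using small[of r1] by (auto simp: right_minus_eq)
  have nz2: "1 - r2 * u \<noteq> 0" using small[of r2] by (auto simp: right_minus_eq)
  have im1: "\<bar>Im (Ln (1 - r1 * u))\<bar> < pi / 2" using Re_Ln_pos_lt_imp Re_pos_small small by blast
  have im2: "\<bar>Im (Ln (1 - r2 * u))\<bar> < pi / 2" using Re_Ln_pos_lt_imp Re_pos_small small by blast
  have "Ln ((1 - r1 * u) * (1 - r2 * u)) = Ln (1 - r1 * u) + Ln (1 - r2 * u)"
    using nz1 nz2 im1 im2 by (intro Ln_times_simple) auto
  then have "log1m (of_real a * u - of_nat q * u^2) = Ln (1 - r1 * u) + Ln (1 - r2 * u)"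
    using log1m_Ln[OF w] fac by simp
  then show ?thesis using s12 unfolding termeq by simp
qed

lemma sq_log:
  fixes u :: complex and c :: complex
  assumes u: "norm u < 1"
  shows "(\<lambda>n. if even (Suc n) then c / of_nat (Suc n) * u ^ Suc n else 0) sums (- c / 2 * log1m (u^2))"
proof -
  have u2: "norm (u^2) < 1" using u by (simp add: norm_power power_less_one_iff abs_less_iff)
  have "(\<lambda>n. (u^2) ^ Suc n / of_nat (Suc n)) sums (- Ln (1 - u^2))" by (rule log_series[OF u2])
  then have "(\<lambda>n. c / 2 * ((u^2) ^ Suc n / of_nat (Suc n))) sums (c / 2 * (- Ln (1 - u^2)))"
    by (rule sums_mult)
  moreover have "c / 2 * (- Ln (1 - u^2)) = - c / 2 * log1m (u^2)" unfolding log1m_Ln[OF u2] by simp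
  ultimately have A: "(\<lambda>n. c / 2 * ((u^2) ^ Suc n / of_nat (Suc n))) sums (- c / 2 * log1m (u^2))" by metis
  define f where "f n = (if even (Suc n) then c / of_nat (Suc n) * u ^ Suc n else 0)" for n
  have fg: "f (2 * n + 1) = c / 2 * ((u^2) ^ Suc n / of_nat (Suc n))" for n
  proof -
    have "f (2 * n + 1) = c / of_nat (2 * Suc n) * u ^ (2 * Suc n)" unfolding f_def by simp
    also have "\<dots> = c / 2 * ((u^2) ^ Suc n / of_nat (Suc n))"
    proof -
      have e1: "u ^ (2 * Suc n) = (u^2)^Suc n" by (simp only: power_mult)
      have e2: "(of_nat (2 * Suc n) :: complex) = 2 * of_nat (Suc n)" by simp
      define N where "N = (of_nat (Suc n) :: complex)"
      have N0: "N \<noteq> 0" unfolding N_def by (rule of_nat_neq_0)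
      have "c / (2 * N) * (u^2)^Suc n = c / 2 * ((u^2) ^ Suc n / N)" using N0 by (simp add: field_simps)
      then show ?thesis unfolding e1 e2 N_def .
    qed
    finally show ?thesis .
  qed
  have "(\<lambda>n. f (2 * n + 1)) sums (- c / 2 * log1m (u^2)) \<longleftrightarrow> f sums (- c / 2 * log1m (u^2))"
  proof (rule sums_mono_reindex)
    show "strict_mono (\<lambda>n::nat. 2 * n + 1)" by (rule strict_monoI) simp
    fix n assume "n \<notin> range (\<lambda>n::nat. 2 * n + 1)"
    then have "even n" by (metis oddE rangeI)
    then show "f n = 0" unfolding f_def by simp
  qed
  moreover have B: "(\<lambda>n. f (2 * n + 1)) sums (- c / 2 * log1m (u^2))" unfolding fg by (rule A)
  ultimately have C: "f sums (- c / 2 * log1m (u^2))" by blast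
  have "f = (\<lambda>n. if even (Suc n) then c / of_nat (Suc n) * u ^ Suc n else 0)" by (simp add: fun_eq_iff f_def)
  then show ?thesis using C by simp
qed


theorem corollary4p6:
  fixes adj :: "'a::finite \<Rightarrow> 'a \<Rightarrow> bool" and q :: nat and x0 :: 'a and u :: complex
  assumes "simple_graph adj" and "connected_graph adj" and "regular_graph adj (q + 1)"
    and "q \<ge> 1"
    and "\<alpha> = (real (q + 1) + sqrt (real (q + 1) ^ 2 + 4 * real (q + 1))) / 2"
    and "norm u < 1 / \<alpha>"
  shows "zeta_local adj u x0 =
    pow1m (u ^ 2) (- (of_nat q - 1) / 2)
    * (\<Prod>lam \<in> local_spectrum adj x0.
         pow1m (complex_of_real (real (q + 1) - lam) * u - of_nat q * u ^ 2)
               (- complex_of_real (local_mult adj x0 lam)))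
    * exp (\<Sum>m. of_int (R_term adj (m + 3) x0) / of_nat (m + 3) * u ^ (m + 3))"
proof -
  interpret G: rgx adj q x0
  proof unfold_locales
    fix x y assume "adj x y" then show "adj y x" using assms(1) unfolding simple_graph_def by blast
  next
    fix x show "\<not> adj x x" using assms(1) unfolding simple_graph_def by blast
  next
    fix x show "card {y. adj x y} = q + 1" using assms(3) unfolding regular_graph_def deg_def by blast
  qed
  define Q where "Q = real (q+1)"
  have Q0: "Q > 0" unfolding Q_def by simp
  have al': "\<alpha> = (Q + sqrt (Q^2 + 4*Q)) / 2" unfolding Q_def using assms(5) .
  have alQ: "\<alpha> > Q" using alpha_sq[OF Q0 al'] by auto
  have al0: "\<alpha> > 0" using alQ Q0 by simp
  have uQ: "Q * norm u < 1"
  proof -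
    have "Q * norm u < Q * (1 / \<alpha>)" using Q0 assms(6) by (rule mult_strict_left_mono[rotated])
    also have "\<dots> < 1" using alQ al0 by simp
    finally show ?thesis .
  qed
  have u1: "norm u < 1"
  proof -
    have "Q \<ge> 1" unfolding Q_def by simp
    then have "norm u \<le> Q * norm u" by (simp add: mult_le_cancel_right1)
    then show ?thesis using uQ by simp
  qed
  let ?LS = "local_spectrum adj x0"
  let ?mu = "\<lambda>lam. local_mult adj x0 lam"
  let ?w = "\<lambda>lam. complex_of_real (real (q + 1) - lam) * u - of_nat q * u ^ 2"
  define TN where "TN n = of_nat (N_count adj (Suc n) x0) / of_nat (Suc n) * u ^ Suc n" for n
  define TE where "TE n = (if even (Suc n) then (of_nat q - 1) / of_nat (Suc n) * u ^ Suc n else 0 :: complex)" for n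
  define TL where "TL lam n = complex_of_real (pp q (Suc n) (real (q+1) - lam)) / of_nat (Suc n) * u ^ Suc n" for lam n
  define TR where "TR n = of_int (R_term adj (Suc n) x0) / of_nat (Suc n) * u ^ Suc n" for n
  have ident: "TR n = TN n - TE n - (\<Sum>lam\<in>?LS. complex_of_real (?mu lam) * TL lam n)" for n
  proof -
    have c: "int (N_count adj (Suc n) x0) = G.gv (Suc n) x0 + (if even (Suc n) then int q - 1 else 0)
        + R_term adj (Suc n) x0"
      by (rule G.comb_main) simp
    have s: "real_of_int (G.gv (Suc n) x0) = (\<Sum>lam\<in>?LS. ?mu lam * pp q (Suc n) (real (q+1) - lam))"
      by (rule G.spec_sum)
    have "(of_nat (N_count adj (Suc n) x0) :: complex) = of_int (int (N_count adj (Suc n) x0))" by simp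
    also have "\<dots> = of_int (G.gv (Suc n) x0) + of_int (if even (Suc n) then int q - 1 else 0)
        + of_int (R_term adj (Suc n) x0)" unfolding c by simp
    also have "(of_int (G.gv (Suc n) x0) :: complex) = of_real (real_of_int (G.gv (Suc n) x0))" by simp
    also have "\<dots> = (\<Sum>lam\<in>?LS. of_real (?mu lam) * of_real (pp q (Suc n) (real (q+1) - lam)))"
      unfolding s by simp
    finally have e: "(of_nat (N_count adj (Suc n) x0) :: complex) =
       (\<Sum>lam\<in>?LS. of_real (?mu lam) * of_real (pp q (Suc n) (real (q+1) - lam)))
       + (if even (Suc n) then of_nat q - 1 else 0) + of_int (R_term adj (Suc n) x0)"
      by simp
    have "TN n = (\<Sum>lam\<in>?LS. of_real (?mu lam) * TL lam n) + TE n + TR n"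
      unfolding TN_def TE_def TL_def TR_def e
      by (simp add: algebra_simps sum_distrib_left sum_distrib_right sum_divide_distrib add_divide_distrib)
    then show ?thesis by simp
  qed
  have sumN: "summable TN"
  proof (rule summable_comparison_test')
    show "summable (\<lambda>n. (Q * norm u) * (Q * norm u) ^ n)"
      using uQ Q0 by (intro summable_mult summable_geometric) (simp add: abs_of_nonneg)
    fix n
    have "norm (TN n) = real (N_count adj (Suc n) x0) / real (Suc n) * norm u ^ Suc n"
      unfolding TN_def by (simp add: norm_mult norm_divide norm_power del: of_nat_Suc)
    also have "\<dots> \<le> real (N_count adj (Suc n) x0) * norm u ^ Suc n"
      by (intro mult_right_mono) (auto simp: divide_le_eq mult_le_cancel_left1)
    also have "\<dots> \<le> Q ^ Suc n * norm u ^ Suc n"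
    proof (rule mult_right_mono)
      have "N_count adj (Suc n) x0 \<le> (q+1) ^ Suc n" by (rule G.N_bound)
      then show "real (N_count adj (Suc n) x0) \<le> Q ^ Suc n" unfolding Q_def
        by (metis of_nat_le_iff of_nat_power)
    qed simp
    also have "\<dots> = (Q * norm u) * (Q * norm u) ^ n" by (simp add: power_mult_distrib)
    finally show "norm (TN n) \<le> (Q * norm u) * (Q * norm u) ^ n" .
  qed
  define sN where "sN = suminf TN"
  have hN: "TN sums sN" unfolding sN_def using sumN by (rule summable_sums)
  define sE where "sE = - (of_nat q - 1) / 2 * log1m (u^2)"
  have hE: "TE sums sE" unfolding TE_def[abs_def] sE_def by (rule sq_log[OF u1])
  define sL where "sL = (\<Sum>lam\<in>?LS. complex_of_real (?mu lam) * (- log1m (?w lam)))"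
  have hL: "(\<lambda>n. \<Sum>lam\<in>?LS. complex_of_real (?mu lam) * TL lam n) sums sL"
    unfolding sL_def
  proof (rule sums_sum)
    fix lam assume lam: "lam \<in> ?LS"
    have "TL lam sums (- log1m (?w lam))"
      unfolding TL_def[abs_def]
      by (rule quad_log[OF assms(5) G.LS_bound[OF lam] assms(6)])
    then show "(\<lambda>n. complex_of_real (?mu lam) * TL lam n) sums (complex_of_real (?mu lam) * (- log1m (?w lam)))"
      by (rule sums_mult)
  qed
  define sR where "sR = sN - sE - sL"
  have hR: "TR sums sR"
  proof -
    have "(\<lambda>n. TN n - TE n - (\<Sum>lam\<in>?LS. complex_of_real (?mu lam) * TL lam n)) sums (sN - sE - sL)"
      by (intro sums_diff hN hE hL)
    then show ?thesis unfolding sR_def ident[symmetric] by (simp add: fun_eq_iff)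
  qed
  have hR3: "(\<lambda>m. of_int (R_term adj (m + 3) x0) / of_nat (m + 3) * u ^ (m + 3)) sums sR"
  proof -
    have j1: "(Suc 0 + 1) div 2 - 1 = 0" by simp
    have j2: "(Suc (Suc 0) + 1) div 2 - 1 = 0" by simp
    have R1: "R_term adj (Suc 0) x0 = 0" unfolding R_term_def j1 by simp
    have R2: "R_term adj (Suc (Suc 0)) x0 = 0" unfolding R_term_def j2 by simp
    have z: "(\<Sum>i<2. TR i) = 0" unfolding TR_def numeral_2_eq_2 using R1 R2 by simp
    have "(\<lambda>i. TR (i + 2)) sums sR" by (subst sums_iff_shift) (simp only: z hR add_0_right)
    moreover have "(\<lambda>i. TR (i + 2)) = (\<lambda>m. of_int (R_term adj (m + 3) x0) / of_nat (m + 3) * u ^ (m + 3))"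
      unfolding TR_def by (simp add: fun_eq_iff eval_nat_numeral)
    ultimately show ?thesis by simp
  qed
  have lhs: "zeta_local adj u x0 = exp sN"
    unfolding zeta_local_def sN_def TN_def ..
  have r1: "pow1m (u ^ 2) (- (of_nat q - 1) / 2) = exp sE" unfolding pow1m_def sE_def ..
  have r2: "(\<Prod>lam \<in> ?LS. pow1m (?w lam) (- complex_of_real (?mu lam))) = exp sL"
  proof -
    have "(\<Prod>lam \<in> ?LS. pow1m (?w lam) (- complex_of_real (?mu lam)))
        = (\<Prod>lam \<in> ?LS. exp (complex_of_real (?mu lam) * (- log1m (?w lam))))"
      unfolding pow1m_def by (intro prod.cong refl) simp
    also have "\<dots> = exp sL" unfolding sL_def by (rule exp_sum[OF G.LS_finite, symmetric])
    finally show ?thesis .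
  qed
  have r3: "(\<Sum>m. of_int (R_term adj (m + 3) x0) / of_nat (m + 3) * u ^ (m + 3)) = sR"
    using hR3 by (rule sums_unique[symmetric])
  have "exp sE * exp sL * exp (sN - sE - sL) = exp (sE + sL + (sN - sE - sL))" by (simp only: exp_add)
  also have "sE + sL + (sN - sE - sL) = sN" by simp
  finally have fin: "exp sN = exp sE * exp sL * exp sR" unfolding sR_def by simp
  show ?thesis unfolding lhs r1 r2 r3 by (rule fin)
qed


end
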